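(* Let $A\in\mathbb{C}^{m\times n}$ have rank $r$, $B\in\mathbb{C}^{m\times n}$ have rank $s$, and $E=B-A$. Then $$\|B^{\dagger}-A^{\dagger}\|_{F}^{2}\leq\min\big\{\delta_{1}+\|B^{\dagger}EA^{\dagger}\|_{F}^{2},\ \delta_{2}+\|A^{\dagger}EB^{\dagger}\|_{F}^{2}\big\},$$ where $$\delta_{1}:=\max\big\{\|A^{\dagger}\|_{2}^{4},\|B^{\dagger}\|_{2}^{4}\big\}\Big(\|E\|_{F}^{2}-\max\Big\{\frac{\|AA^{\dagger}EB^{\dagger}\|_{F}^{2}}{\|B^{\dagger}\|_{2}^{2}},\frac{\|A^{\dagger}EB^{\dagger}B\|_{F}^{2}}{\|A^{\dagger}\|_{2}^{2}}\Big\}\Big),$$ $$\delta_{2}:=\max\big\{\|A^{\dagger}\|_{2}^{4},\|B^{\dagger}\|_{2}^{4}\big\}\Big(\|E\|_{F}^{2}-\max\Big\{\frac{\|BB^{\dagger}EA^{\dagger}\|_{F}^{2}}{\|A^{\dagger}\|_{2}^{2}},\frac{\|B^{\dagger}EA^{\dagger}A\|_{F}^{2}}{\|B^{\dagger}\|_{2}^{2}}\Big\}\Big).$$ In particular, if $s=r$, then $$\|B^{\dagger}-A^{\dagger}\|_{F}^{2}\leq\min\big\{\varepsilon_{1}+\|B^{\dagger}EA^{\dagger}\|_{F}^{2},\ \varepsilon_{2}+\|A^{\dagger}EB^{\dagger}\|_{F}^{2}\big\},$$ where $$\varepsilon_{1}:=\|A^{\dagger}\|_{2}^{2}\|B^{\dagger}\|_{2}^{2}\Big(\|E\|_{F}^{2}-\max\Big\{\frac{\|BB^{\dagger}EA^{\dagger}\|_{F}^{2}}{\|A^{\dagger}\|_{2}^{2}},\frac{\|B^{\dagger}EA^{\dagger}A\|_{F}^{2}}{\|B^{\dagger}\|_{2}^{2}}\Big\}\Big),$$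 $$\varepsilon_{2}:=\|A^{\dagger}\|_{2}^{2}\|B^{\dagger}\|_{2}^{2}\Big(\|E\|_{F}^{2}-\max\Big\{\frac{\|AA^{\dagger}EB^{\dagger}\|_{F}^{2}}{\|B^{\dagger}\|_{2}^{2}},\frac{\|A^{\dagger}EB^{\dagger}B\|_{F}^{2}}{\|A^{\dagger}\|_{2}^{2}}\Big\}\Big).$$
   Context: $M^{\dagger}$ denotes the Moore–Penrose inverse of $M$, $\|\cdot\|_{2}$ the spectral norm and $\|\cdot\|_{F}$ the Frobenius norm. *)

theory Defs
  imports "Jordan_Normal_Form.Schur_Decomposition" "Jordan_Normal_Form.DL_Rank"
begin

definition is_moore_penrose :: "complex mat \<Rightarrow> complex mat \<Rightarrow> bool" where
  "is_moore_penrose A X \<longleftrightarrow>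
     X \<in> carrier_mat (dim_col A) (dim_row A) \<and>
     A * X * A = A \<and> X * A * X = X \<and>
     mat_adjoint (A * X) = A * X \<and> mat_adjoint (X * A) = X * A"

definition pinv :: "complex mat \<Rightarrow> complex mat" where
  "pinv A = (THE X. is_moore_penrose A X)"

definition vnorm2 :: "complex vec \<Rightarrow> real" where
  "vnorm2 v = sqrt (\<Sum>i<dim_vec v. (cmod (v $ i))\<^sup>2)"

definition fro_norm :: "complex mat \<Rightarrow> real" where
  "fro_norm A = sqrt (\<Sum>i<dim_row A. \<Sum>j<dim_col A. (cmod (A $$ (i, j)))\<^sup>2)"

definition spec_norm :: "complex mat \<Rightarrow> real" where
  "spec_norm A = Sup {vnorm2 (A *\<^sub>v x) | x. x \<in> carrier_vec (dim_col A) \<and> vnorm2 x \<le> 1}"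

definition crank :: "complex mat \<Rightarrow> nat" where
  "crank A = vec_space.rank (dim_row A) A"

end

theory Submission
  imports Defs
begin
lemma adj_def': "mat_adjoint A = mat (dim_col A) (dim_row A) (\<lambda>(i,j). cnj (A $$ (j,i)))"
  unfolding mat_adjoint_def mat_of_rows_def
  by (rule eq_matI) simp_all

lemma adj_dims[simp]: "dim_row (mat_adjoint (A::complex mat)) = dim_col A" "dim_col (mat_adjoint A) = dim_row A"
  by (simp_all add: adj_def')

lemma adj_index[simp]: "i < dim_col A \<Longrightarrow> j < dim_row A \<Longrightarrow> mat_adjoint (A::complex mat) $$ (i,j) = cnj (A $$ (j,i))"
  by (simp add: adj_def')

lemma adj_carrier[simp]: "(A::complex mat) \<in> carrier_mat n m \<Longrightarrow> mat_adjoint A \<in> carrier_mat m n"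
  by (metis carrier_matD carrier_matI adj_dims)

lemma adj_adj[simp]: "mat_adjoint (mat_adjoint (A::complex mat)) = A"
  by (rule eq_matI) simp_all

lemma adj_mult: assumes "(A::complex mat) \<in> carrier_mat n k" "B \<in> carrier_mat k m"
  shows "mat_adjoint (A * B) = mat_adjoint B * mat_adjoint A"
  using assms by (intro eq_matI) (auto simp: scalar_prod_def row_def col_def sum_conjugate intro!: sum.cong)

lemma adj_add: assumes "(A::complex mat) \<in> carrier_mat n m" "B \<in> carrier_mat n m"
  shows "mat_adjoint (A + B) = mat_adjoint A + mat_adjoint B"
  using assms by (intro eq_matI) auto

lemma adj_minus: assumes "(A::complex mat) \<in> carrier_mat n m" "B \<in> carrier_mat n m"
  shows "mat_adjoint (A - B) = mat_adjoint A - mat_adjoint B"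
  using assms by (intro eq_matI) auto

lemma adj_uminus: "mat_adjoint (- (A::complex mat)) = - mat_adjoint A"
  by (intro eq_matI) auto

lemma adj_one[simp]: "mat_adjoint (1\<^sub>m n :: complex mat) = 1\<^sub>m n"
  by (intro eq_matI) auto

lemma adj_zero[simp]: "mat_adjoint (0\<^sub>m n m :: complex mat) = 0\<^sub>m m n"
  by (intro eq_matI) auto

definition tr :: "complex mat \<Rightarrow> complex" where
  "tr A = (\<Sum>i<dim_row A. A $$ (i,i))"

lemma tr_add: "A \<in> carrier_mat n n \<Longrightarrow> B \<in> carrier_mat n n \<Longrightarrow> tr (A + B) = tr A + tr B"
  by (auto simp: tr_def sum.distrib)

lemma tr_minus: "A \<in> carrier_mat n n \<Longrightarrow> B \<in> carrier_mat n n \<Longrightarrow> tr (A - B) = tr A - tr B"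
  by (auto simp: tr_def sum_subtractf)

lemma tr_zero[simp]: "tr (0\<^sub>m n n) = 0"
  by (auto simp: tr_def)

lemma tr_one[simp]: "tr (1\<^sub>m n) = of_nat n"
  by (auto simp: tr_def)

lemma tr_comm: assumes "(A::complex mat) \<in> carrier_mat n k" "B \<in> carrier_mat k n"
  shows "tr (A * B) = tr (B * A)"
proof -
  have "tr (A * B) = (\<Sum>i<n. \<Sum>j<k. A $$ (i,j) * B $$ (j,i))"
    using assms by (auto simp: tr_def scalar_prod_def row_def col_def atLeast0LessThan)
  also have "\<dots> = (\<Sum>j<k. \<Sum>i<n. B $$ (j,i) * A $$ (i,j))"
    by (subst sum.swap) (simp add: mult.commute)
  also have "\<dots> = tr (B * A)"
    using assms by (auto simp: tr_def scalar_prod_def row_def col_def atLeast0LessThan)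
  finally show ?thesis .
qed

lemma fro_sq: "(fro_norm A)\<^sup>2 = (\<Sum>i<dim_row A. \<Sum>j<dim_col A. (cmod (A $$ (i, j)))\<^sup>2)"
proof -
  have "0 \<le> (\<Sum>i<dim_row A. \<Sum>j<dim_col A. (cmod (A $$ (i, j)))\<^sup>2)"
    by (intro sum_nonneg) simp
  then show ?thesis unfolding fro_norm_def by simp
qed

lemma fro_nonneg: "fro_norm A \<ge> 0"
  unfolding fro_norm_def by (intro real_sqrt_ge_zero sum_nonneg) simp

lemma tr_adj_mult: "tr (mat_adjoint A * A) = complex_of_real ((fro_norm A)\<^sup>2)"
proof -
  have "tr (mat_adjoint A * A) = (\<Sum>j<dim_col A. \<Sum>i<dim_row A. cnj (A $$ (i,j)) * A $$ (i,j))"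
    by (auto simp: tr_def scalar_prod_def row_def col_def atLeast0LessThan)
  also have "\<dots> = (\<Sum>j<dim_col A. \<Sum>i<dim_row A. complex_of_real ((cmod (A $$ (i,j)))\<^sup>2))"
    by (intro sum.cong refl) (metis complex_norm_square mult.commute of_real_power)
  also have "\<dots> = complex_of_real ((fro_norm A)\<^sup>2)"
    unfolding fro_sq by (subst sum.swap) simp
  finally show ?thesis .
qed

lemma fro_adj[simp]: "fro_norm (mat_adjoint A) = fro_norm A"
proof -
  have "(\<Sum>i<dim_col A. \<Sum>j<dim_row A. (cmod (cnj (A $$ (j, i))))\<^sup>2) = 
        (\<Sum>i<dim_row A. \<Sum>j<dim_col A. (cmod (A $$ (i, j)))\<^sup>2)"
    by (subst sum.swap) simp
  then show ?thesis unfolding fro_norm_def by simp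
qed

lemma fro_uminus[simp]: "fro_norm (- A) = fro_norm A"
  unfolding fro_norm_def by simp

lemma fro_orth: assumes X: "X \<in> carrier_mat k l" and Y: "Y \<in> carrier_mat k l"
  and o: "mat_adjoint X * Y = 0\<^sub>m l l"
  shows "(fro_norm (X + Y))\<^sup>2 = (fro_norm X)\<^sup>2 + (fro_norm Y)\<^sup>2"
proof -
  have o2: "mat_adjoint Y * X = 0\<^sub>m l l"
  proof -
    have "mat_adjoint Y * X = mat_adjoint (mat_adjoint X * Y)"
      using X Y by (simp add: adj_mult[of _ l k _ l])
    then show ?thesis using o by simp
  qed
  have "complex_of_real ((fro_norm (X + Y))\<^sup>2) = tr (mat_adjoint (X+Y) * (X + Y))"
    by (simp add: tr_adj_mult)
  also have "\<dots> = tr (mat_adjoint X * X + mat_adjoint Y * X + (mat_adjoint X * Y + mat_adjoint Y * Y))"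
    using X Y by (simp add: adj_add[OF X Y] add_mult_distrib_mat[of _ l k] mult_add_distrib_mat[of _ l k])
  also have "\<dots> = tr (mat_adjoint X * X) + tr (mat_adjoint Y * Y)"
    using X Y o o2 by (subst tr_add[of _ l], (auto)[2])+ simp
  also have "\<dots> = complex_of_real ((fro_norm X)\<^sup>2 + (fro_norm Y)\<^sup>2)"
    by (simp add: tr_adj_mult)
  finally show ?thesis using of_real_eq_iff by blast
qed

lemma fro_orth_r: assumes X: "X \<in> carrier_mat k l" and Y: "Y \<in> carrier_mat k l"
  and o: "X * mat_adjoint Y = 0\<^sub>m k k"
  shows "(fro_norm (X + Y))\<^sup>2 = (fro_norm X)\<^sup>2 + (fro_norm Y)\<^sup>2"
proof -
  have "(fro_norm (mat_adjoint X + mat_adjoint Y))\<^sup>2 = (fro_norm (mat_adjoint X))\<^sup>2 + (fro_norm (mat_adjoint Y))\<^sup>2"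
    using X Y o by (intro fro_orth[of _ l k]) auto
  then show ?thesis using adj_add[OF X Y, symmetric] by simp
qed

lemma cs_real: fixes a b :: "'i \<Rightarrow> real"
  shows "(\<Sum>i\<in>I. a i * b i)\<^sup>2 \<le> (\<Sum>i\<in>I. (a i)\<^sup>2) * (\<Sum>i\<in>I. (b i)\<^sup>2)"
proof (cases "finite I")
  case fin: True
  define S where "S = (\<Sum>i\<in>I. (a i)\<^sup>2)"
  define T where "T = (\<Sum>i\<in>I. (b i)\<^sup>2)"
  define P where "P = (\<Sum>i\<in>I. a i * b i)"
  show ?thesis
  proof (cases "T = 0")
    case True
    then have "\<forall>i\<in>I. (b i)\<^sup>2 = 0" using fin unfolding T_def
      by (subst sum_nonneg_eq_0_iff[symmetric]) auto
    then have "P = 0" unfolding P_def by simp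
    then show ?thesis unfolding P_def[symmetric] S_def[symmetric] T_def[symmetric] using True by simp
  next
    case False
    have T0: "T > 0" using False unfolding T_def by (metis less_eq_real_def sum_nonneg zero_le_power2)
    have "0 \<le> (\<Sum>i\<in>I. (a i * T - b i * P)\<^sup>2)" by (simp add: sum_nonneg)
    also have "\<dots> = (\<Sum>i\<in>I. T\<^sup>2 * (a i)\<^sup>2 - 2 * T * P * (a i * b i) + P\<^sup>2 * (b i)\<^sup>2)"
      by (rule sum.cong) (simp_all add: power2_eq_square algebra_simps)
    also have "\<dots> = T\<^sup>2 * S - 2 * T * P * P + P\<^sup>2 * T"
      unfolding sum.distrib sum_subtractf sum_distrib_left[symmetric] S_def[symmetric] T_def[symmetric] P_def[symmetric]
      by simp
    also have "\<dots> = T * (S * T - P\<^sup>2)" by (simp add: power2_eq_square algebra_simps)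
    finally have "0 \<le> S * T - P\<^sup>2" using T0 by (simp add: zero_le_mult_iff)
    then show ?thesis unfolding P_def[symmetric] S_def[symmetric] T_def[symmetric] by simp
  qed
qed simp

lemma cs_complex: fixes a b :: "'i \<Rightarrow> complex"
  shows "cmod (\<Sum>i\<in>I. a i * b i) \<le> sqrt (\<Sum>i\<in>I. (cmod (a i))\<^sup>2) * sqrt (\<Sum>i\<in>I. (cmod (b i))\<^sup>2)"
proof -
  have "cmod (\<Sum>i\<in>I. a i * b i) \<le> (\<Sum>i\<in>I. cmod (a i) * cmod (b i))"
    by (metis (no_types, lifting) norm_mult norm_sum sum.cong)
  also have "\<dots> \<le> sqrt ((\<Sum>i\<in>I. (cmod (a i))\<^sup>2) * (\<Sum>i\<in>I. (cmod (b i))\<^sup>2))"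
    by (rule real_le_rsqrt) (rule cs_real)
  finally show ?thesis by (simp add: real_sqrt_mult)
qed

lemma vnorm2_nonneg: "vnorm2 v \<ge> 0"
  unfolding vnorm2_def by (intro real_sqrt_ge_zero sum_nonneg) simp

lemma vnorm2_sq: "(vnorm2 v)\<^sup>2 = (\<Sum>i<dim_vec v. (cmod (v $ i))\<^sup>2)"
proof -
  have "0 \<le> (\<Sum>i<dim_vec v. (cmod (v $ i))\<^sup>2)" by (intro sum_nonneg) simp
  then show ?thesis unfolding vnorm2_def by simp
qed

lemma vnorm2_smult: "vnorm2 (c \<cdot>\<^sub>v v) = cmod c * vnorm2 v"
proof -
  have "(\<Sum>i<dim_vec v. (cmod (c * v $ i))\<^sup>2) = (cmod c)\<^sup>2 * (\<Sum>i<dim_vec v. (cmod (v $ i))\<^sup>2)"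
    by (simp add: sum_distrib_left norm_mult power_mult_distrib)
  then show ?thesis unfolding vnorm2_def by (simp add: real_sqrt_mult)
qed

lemma mat_vec_fro: assumes v: "v \<in> carrier_vec (dim_col X)"
  shows "vnorm2 (X *\<^sub>v v) \<le> fro_norm X * vnorm2 v"
proof -
  have "(vnorm2 (X *\<^sub>v v))\<^sup>2 = (\<Sum>i<dim_row X. (cmod (\<Sum>j<dim_col X. X $$ (i,j) * v $ j))\<^sup>2)"
    unfolding vnorm2_sq using v by (simp add: scalar_prod_def row_def atLeast0LessThan)
  also have "\<dots> \<le> (\<Sum>i<dim_row X. (\<Sum>j<dim_col X. (cmod (X $$ (i,j)))\<^sup>2) * (\<Sum>j<dim_col X. (cmod (v $ j))\<^sup>2))"
  proof (rule sum_mono)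
    fix i
    have "cmod (\<Sum>j<dim_col X. X $$ (i,j) * v $ j) \<le> sqrt (\<Sum>j<dim_col X. (cmod (X $$ (i,j)))\<^sup>2) * sqrt (\<Sum>j<dim_col X. (cmod (v $ j))\<^sup>2)"
      by (rule cs_complex)
    then have "(cmod (\<Sum>j<dim_col X. X $$ (i,j) * v $ j))\<^sup>2 \<le> (sqrt (\<Sum>j<dim_col X. (cmod (X $$ (i,j)))\<^sup>2) * sqrt (\<Sum>j<dim_col X. (cmod (v $ j))\<^sup>2))\<^sup>2"
      by (rule power_mono) auto
    also have "\<dots> = (\<Sum>j<dim_col X. (cmod (X $$ (i,j)))\<^sup>2) * (\<Sum>j<dim_col X. (cmod (v $ j))\<^sup>2)"
      by (simp add: power_mult_distrib sum_nonneg)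
    finally show "(cmod (\<Sum>j<dim_col X. X $$ (i,j) * v $ j))\<^sup>2 \<le> (\<Sum>j<dim_col X. (cmod (X $$ (i,j)))\<^sup>2) * (\<Sum>j<dim_col X. (cmod (v $ j))\<^sup>2)" .
  qed
  also have "\<dots> = (\<Sum>i<dim_row X. \<Sum>j<dim_col X. (cmod (X $$ (i,j)))\<^sup>2) * (\<Sum>j<dim_col X. (cmod (v $ j))\<^sup>2)"
    by (rule sum_distrib_right[symmetric])
  also have "\<dots> = (fro_norm X * vnorm2 v)\<^sup>2"
  proof -
    have dv: "dim_vec v = dim_col X" using v by auto
    have "(fro_norm X * vnorm2 v)\<^sup>2 = (fro_norm X)\<^sup>2 * (vnorm2 v)\<^sup>2" by (rule power_mult_distrib)
    also have "\<dots> = (\<Sum>i<dim_row X. \<Sum>j<dim_col X. (cmod (X $$ (i,j)))\<^sup>2) * (\<Sum>j<dim_col X. (cmod (v $ j))\<^sup>2)"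
      by (simp only: fro_sq vnorm2_sq dv)
    finally show ?thesis by simp
  qed
  finally have sq: "(vnorm2 (X *\<^sub>v v))\<^sup>2 \<le> (fro_norm X * vnorm2 v)\<^sup>2" .
  show ?thesis by (rule power2_le_imp_le[OF sq]) (simp add: fro_nonneg vnorm2_nonneg)
qed

definition spec_set :: "complex mat \<Rightarrow> real set" where
  "spec_set A = {vnorm2 (A *\<^sub>v x) | x. x \<in> carrier_vec (dim_col A) \<and> vnorm2 x \<le> 1}"

lemma spec_norm_alt: "spec_norm A = Sup (spec_set A)"
  unfolding spec_norm_def spec_set_def ..

lemma spec_set_bdd: "bdd_above (spec_set A)"
proof (rule bdd_aboveI)
  fix y assume "y \<in> spec_set A"
  then obtain x where x: "x \<in> carrier_vec (dim_col A)" "vnorm2 x \<le> 1" "y = vnorm2 (A *\<^sub>v x)"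
    unfolding spec_set_def by auto
  have "y \<le> fro_norm A * vnorm2 x" using mat_vec_fro[OF x(1)] x(3) by simp
  also have "\<dots> \<le> fro_norm A * 1" using x(2) fro_nonneg by (intro mult_left_mono) auto
  finally show "y \<le> fro_norm A" by simp
qed

lemma vnorm2_zero: "vnorm2 (0\<^sub>v n) = 0"
  unfolding vnorm2_def by simp

lemma spec_set_0: "0 \<in> spec_set A"
proof -
  have "0\<^sub>v (dim_col A) \<in> carrier_vec (dim_col A)" by simp
  moreover have "A *\<^sub>v 0\<^sub>v (dim_col A) = 0\<^sub>v (dim_row A)" by (intro eq_vecI) auto
  ultimately show ?thesis unfolding spec_set_def using vnorm2_zero
    by (metis (mono_tags, lifting) mem_Collect_eq zero_less_one_class.zero_le_one)
qed

lemma spec_nonneg: "spec_norm A \<ge> 0"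
  unfolding spec_norm_alt using spec_set_0 spec_set_bdd by (rule cSup_upper)

lemma spec_bound: assumes v: "v \<in> carrier_vec (dim_col X)"
  shows "vnorm2 (X *\<^sub>v v) \<le> spec_norm X * vnorm2 v"
proof (cases "vnorm2 v = 0")
  case True
  then show ?thesis using mat_vec_fro[OF v] by simp
next
  case False
  then have vp: "vnorm2 v > 0" using vnorm2_nonneg[of v] by linarith
  define c where "c = complex_of_real (1 / vnorm2 v)"
  define w where "w = c \<cdot>\<^sub>v v"
  have w: "w \<in> carrier_vec (dim_col X)" using v unfolding w_def by simp
  have cm: "cmod c = 1 / vnorm2 v" unfolding c_def using vp by (simp add: norm_divide)
  have "vnorm2 w = 1" unfolding w_def vnorm2_smult cm using vp by simp
  then have "vnorm2 (X *\<^sub>v w) \<in> spec_set X" unfolding spec_set_def using w by auto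
  then have "vnorm2 (X *\<^sub>v w) \<le> spec_norm X" unfolding spec_norm_alt using spec_set_bdd by (rule cSup_upper)
  moreover have "X *\<^sub>v w = c \<cdot>\<^sub>v (X *\<^sub>v v)" unfolding w_def
    using v by (intro mult_mat_vec[of _ "dim_row X" "dim_col X"]) auto
  ultimately have "vnorm2 (X *\<^sub>v v) / vnorm2 v \<le> spec_norm X" by (simp add: vnorm2_smult cm)
  then show ?thesis using vp by (simp add: divide_le_eq mult.commute)
qed

lemma adj_spec_bound: assumes v: "v \<in> carrier_vec (dim_row X)"
  shows "vnorm2 (mat_adjoint X *\<^sub>v v) \<le> spec_norm X * vnorm2 v"
proof -
  define w where "w = mat_adjoint X *\<^sub>v v"
  have w: "w \<in> carrier_vec (dim_col X)" unfolding w_def by (rule carrier_vecI) simp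
  have wi: "w $ i = (\<Sum>j<dim_row X. cnj (X $$ (j,i)) * v $ j)" if "i < dim_col X" for i
    unfolding w_def using that v by (simp add: scalar_prod_def row_def atLeast0LessThan)
  have Xw: "(X *\<^sub>v w) $ j = (\<Sum>i<dim_col X. X $$ (j,i) * w $ i)" if "j < dim_row X" for j
    using that w by (simp add: scalar_prod_def row_def atLeast0LessThan)
  have "complex_of_real ((vnorm2 w)\<^sup>2) = (\<Sum>i<dim_col X. w $ i * cnj (w $ i))"
    unfolding vnorm2_sq of_real_sum complex_norm_square using w by simp
  also have "\<dots> = (\<Sum>i<dim_col X. \<Sum>j<dim_row X. v $ j * cnj (X $$ (j,i) * w $ i))"
  proof (intro sum.cong refl)
    fix i assume "i \<in> {..<dim_col X}"
    then have i: "i < dim_col X" by simp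
    have "w $ i * cnj (w $ i) = (\<Sum>j<dim_row X. cnj (X $$ (j,i)) * v $ j) * cnj (w $ i)"
      by (rule arg_cong[where f="\<lambda>t. t * cnj (w $ i)", OF wi[OF i]])
    also have "\<dots> = (\<Sum>j<dim_row X. v $ j * cnj (X $$ (j,i) * w $ i))"
      by (simp add: sum_distrib_right sum_distrib_left mult_ac)
    finally show "w $ i * cnj (w $ i) = (\<Sum>j<dim_row X. v $ j * cnj (X $$ (j,i) * w $ i))" .
  qed
  also have "\<dots> = (\<Sum>j<dim_row X. v $ j * cnj ((X *\<^sub>v w) $ j))"
  proof (subst sum.swap, intro sum.cong refl)
    fix j assume "j \<in> {..<dim_row X}" then have j: "j < dim_row X" by simp
    show "(\<Sum>i<dim_col X. v $ j * cnj (X $$ (j,i) * w $ i)) = v $ j * cnj ((X *\<^sub>v w) $ j)"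
      unfolding Xw[OF j] by (simp add: sum_distrib_left)
  qed
  finally have eq: "complex_of_real ((vnorm2 w)\<^sup>2) = (\<Sum>j<dim_row X. v $ j * cnj ((X *\<^sub>v w) $ j))" .
  have "(vnorm2 w)\<^sup>2 = cmod (complex_of_real ((vnorm2 w)\<^sup>2))"
    by (simp only: norm_of_real abs_power2)
  also have "\<dots> \<le> sqrt (\<Sum>j<dim_row X. (cmod (v $ j))\<^sup>2) * sqrt (\<Sum>j<dim_row X. (cmod (cnj ((X *\<^sub>v w) $ j)))\<^sup>2)"
    unfolding eq by (rule cs_complex)
  also have "\<dots> = vnorm2 v * vnorm2 (X *\<^sub>v w)"
    using v unfolding vnorm2_def by simp
  also have "\<dots> \<le> vnorm2 v * (spec_norm X * vnorm2 w)"
    using spec_bound[OF w] vnorm2_nonneg by (intro mult_left_mono) auto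
  finally have le: "(vnorm2 w)\<^sup>2 \<le> vnorm2 v * (spec_norm X * vnorm2 w)" .
  show ?thesis
  proof (cases "vnorm2 w = 0")
    case True
    then show ?thesis unfolding w_def using spec_nonneg vnorm2_nonneg by simp
  next
    case False
    then have "vnorm2 w > 0" using vnorm2_nonneg[of w] by linarith
    with le have "vnorm2 w \<le> vnorm2 v * spec_norm X"
      by (simp add: power2_eq_square mult.commute mult.left_commute)
    then show ?thesis unfolding w_def by (simp add: mult.commute)
  qed
qed

lemma fro_cols: "(fro_norm Z)\<^sup>2 = (\<Sum>j<dim_col Z. (vnorm2 (col Z j))\<^sup>2)"
  unfolding fro_sq vnorm2_sq by (subst sum.swap) simp

lemma fro_mult_left: assumes X: "X \<in> carrier_mat k l" and Y: "Y \<in> carrier_mat l m"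
  shows "(fro_norm (X * Y))\<^sup>2 \<le> (spec_norm X)\<^sup>2 * (fro_norm Y)\<^sup>2"
proof -
  have "(fro_norm (X * Y))\<^sup>2 = (\<Sum>j<m. (vnorm2 (X *\<^sub>v col Y j))\<^sup>2)"
  proof -
    have "col (X * Y) j = X *\<^sub>v col Y j" if "j < m" for j
      by (rule col_mult2[OF X Y that])
    then show ?thesis unfolding fro_cols using X Y by simp
  qed
  also have "\<dots> \<le> (\<Sum>j<m. (spec_norm X)\<^sup>2 * (vnorm2 (col Y j))\<^sup>2)"
  proof (rule sum_mono)
    fix j assume "j \<in> {..<m}"
    have "vnorm2 (X *\<^sub>v col Y j) \<le> spec_norm X * vnorm2 (col Y j)"
      using X Y by (intro spec_bound) auto
    then show "(vnorm2 (X *\<^sub>v col Y j))\<^sup>2 \<le> (spec_norm X)\<^sup>2 * (vnorm2 (col Y j))\<^sup>2"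
      using vnorm2_nonneg by (metis power_mono power_mult_distrib)
  qed
  also have "\<dots> = (spec_norm X)\<^sup>2 * (fro_norm Y)\<^sup>2"
    unfolding fro_cols using Y by (simp add: sum_distrib_left)
  finally show ?thesis .
qed

lemma fro_adj_mult_left: assumes X: "X \<in> carrier_mat l k" and Y: "Y \<in> carrier_mat l m"
  shows "(fro_norm (mat_adjoint X * Y))\<^sup>2 \<le> (spec_norm X)\<^sup>2 * (fro_norm Y)\<^sup>2"
proof -
  have "(fro_norm (mat_adjoint X * Y))\<^sup>2 = (\<Sum>j<m. (vnorm2 (mat_adjoint X *\<^sub>v col Y j))\<^sup>2)"
  proof -
    have "col (mat_adjoint X * Y) j = mat_adjoint X *\<^sub>v col Y j" if "j < m" for j
      by (rule col_mult2[OF adj_carrier[OF X] Y that])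
    then show ?thesis unfolding fro_cols using X Y by simp
  qed
  also have "\<dots> \<le> (\<Sum>j<m. (spec_norm X)\<^sup>2 * (vnorm2 (col Y j))\<^sup>2)"
  proof (rule sum_mono)
    fix j assume "j \<in> {..<m}"
    have "vnorm2 (mat_adjoint X *\<^sub>v col Y j) \<le> spec_norm X * vnorm2 (col Y j)"
      using X Y by (intro adj_spec_bound) auto
    then show "(vnorm2 (mat_adjoint X *\<^sub>v col Y j))\<^sup>2 \<le> (spec_norm X)\<^sup>2 * (vnorm2 (col Y j))\<^sup>2"
      using vnorm2_nonneg by (metis power_mono power_mult_distrib)
  qed
  also have "\<dots> = (spec_norm X)\<^sup>2 * (fro_norm Y)\<^sup>2"
    unfolding fro_cols using Y by (simp add: sum_distrib_left)
  finally show ?thesis .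
qed

lemma fro_mult_right: assumes X: "X \<in> carrier_mat k l" and Y: "Y \<in> carrier_mat l m"
  shows "(fro_norm (X * Y))\<^sup>2 \<le> (fro_norm X)\<^sup>2 * (spec_norm Y)\<^sup>2"
proof -
  have "fro_norm (X * Y) = fro_norm (mat_adjoint Y * mat_adjoint X)"
    using adj_mult[OF X Y] fro_adj by metis
  moreover have "(fro_norm (mat_adjoint Y * mat_adjoint X))\<^sup>2 \<le> (spec_norm Y)\<^sup>2 * (fro_norm (mat_adjoint X))\<^sup>2"
    using X Y by (intro fro_adj_mult_left[of _ l m _ k]) auto
  ultimately show ?thesis by (simp add: mult.commute)
qed

lemma massoc: "dim_col A = dim_row B \<Longrightarrow> dim_col B = dim_row C \<Longrightarrow> A * B * C = A * (B * (C::'a::semiring_0 mat))"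
  by (rule assoc_mult_mat[of A "dim_row A" "dim_col A" B "dim_col B" C "dim_col C"]) (auto intro: carrier_matI)

lemma madj_mult: "dim_col A = dim_row B \<Longrightarrow> mat_adjoint (A * B) = mat_adjoint B * mat_adjoint (A::complex mat)"
  by (rule adj_mult[of A "dim_row A" "dim_col A" B "dim_col B"]) (auto intro: carrier_matI)

lemma mat_vec_unit: assumes "(F::'a::semiring_1 mat) \<in> carrier_mat n k" "i < k"
  shows "F *\<^sub>v unit_vec k i = col F i"
  using assms by (intro eq_vecI) auto

lemma adj_mult_vec_zero: fixes M :: "complex mat"
  assumes v: "v \<in> carrier_vec (dim_col M)" and z: "mat_adjoint M *\<^sub>v (M *\<^sub>v v) = 0\<^sub>v (dim_col M)"
  shows "M *\<^sub>v v = 0\<^sub>v (dim_row M)"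
proof -
  define w where "w = M *\<^sub>v v"
  have w: "w \<in> carrier_vec (dim_row M)" unfolding w_def by (rule carrier_vecI) simp
  have wi: "w $ i = (\<Sum>j<dim_col M. M $$ (i,j) * v $ j)" if "i < dim_row M" for i
    unfolding w_def using that v by (simp add: scalar_prod_def row_def atLeast0LessThan)
  have zj: "(\<Sum>i<dim_row M. cnj (M $$ (i,j)) * w $ i) = 0" if "j < dim_col M" for j
  proof -
    have "(mat_adjoint M *\<^sub>v w) $ j = 0" using z that unfolding w_def by simp
    then show ?thesis using that w by (simp add: scalar_prod_def row_def atLeast0LessThan)
  qed
  have "complex_of_real (\<Sum>i<dim_row M. (cmod (w $ i))\<^sup>2) = (\<Sum>i<dim_row M. w $ i * cnj (w $ i))"
    unfolding of_real_sum complex_norm_square ..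
  also have "\<dots> = (\<Sum>i<dim_row M. \<Sum>j<dim_col M. v $ j * cnj (cnj (M $$ (i,j)) * w $ i))"
  proof (intro sum.cong refl)
    fix i assume "i \<in> {..<dim_row M}"
    then have i: "i < dim_row M" by simp
    have "w $ i * cnj (w $ i) = (\<Sum>j<dim_col M. M $$ (i,j) * v $ j) * cnj (w $ i)"
      by (rule arg_cong[where f="\<lambda>t. t * cnj (w $ i)", OF wi[OF i]])
    also have "\<dots> = (\<Sum>j<dim_col M. v $ j * cnj (cnj (M $$ (i,j)) * w $ i))"
      by (simp add: sum_distrib_right sum_distrib_left mult_ac)
    finally show "w $ i * cnj (w $ i) = (\<Sum>j<dim_col M. v $ j * cnj (cnj (M $$ (i,j)) * w $ i))" .
  qed
  also have "\<dots> = (\<Sum>j<dim_col M. v $ j * cnj (\<Sum>i<dim_row M. cnj (M $$ (i,j)) * w $ i))"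
    by (subst sum.swap) (simp add: sum_distrib_left)
  also have "\<dots> = 0" by (simp add: zj)
  finally have "complex_of_real (\<Sum>i<dim_row M. (cmod (w $ i))\<^sup>2) = 0" .
  then have "(\<Sum>i<dim_row M. (cmod (w $ i))\<^sup>2) = 0" by (simp only: of_real_eq_0_iff)
  then have "\<forall>i\<in>{..<dim_row M}. (cmod (w $ i))\<^sup>2 = 0"
    by (subst sum_nonneg_eq_0_iff[symmetric]) auto
  then have "w = 0\<^sub>v (dim_row M)" using w by (intro eq_vecI) auto
  then show ?thesis unfolding w_def .
qed

lemma (in vec_space) full_rank_factor:
  assumes A: "A \<in> carrier_mat n nc"
  shows "\<exists>k F G. F \<in> carrier_mat n k \<and> G \<in> carrier_mat k nc \<and> A = F * G \<and> rank A = k \<and>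
     (\<forall>c \<in> carrier_vec k. F *\<^sub>v c = 0\<^sub>v n \<longrightarrow> c = 0\<^sub>v k) \<and> (\<forall>i<k. \<exists>j<nc. col G j = unit_vec k i)"
proof -
  obtain S where max: "maximal S (\<lambda>T. T \<subseteq> set (cols A) \<and> lin_indpt T)"
    using maximal_exists[of "(\<lambda>T. T \<subseteq> set (cols A) \<and> lin_indpt T)" "card (set (cols A))" "{}"]
    by (meson List.finite_set card_mono empty_iff empty_subsetI finite_lin_indpt2 rev_finite_subset)
  then have Ssub: "S \<subseteq> set (cols A)" and li: "lin_indpt S" unfolding maximal_def by auto
  have finS: "finite S" using Ssub by (rule finite_subset) simp
  have Scar: "S \<subseteq> carrier_vec n" using Ssub cols_dim A by blast
  obtain fs where fs: "set fs = S" "distinct fs" using finite_distinct_list[OF finS] by blast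
  define k where "k = length fs"
  have cardS: "card S = k" unfolding k_def using fs distinct_card by blast
  have rk: "rank A = k" using rank_card_indpt[OF A max] cardS by simp
  define F where "F = mat_of_cols n fs"
  have F: "F \<in> carrier_mat n k" unfolding F_def k_def by simp
  have fscar: "set fs \<subseteq> carrier_vec n" using fs Scar by simp
  have colsF: "cols F = fs" unfolding F_def using fscar by simp
  have colF: "col F i = fs ! i" if "i < k" for i
    unfolding F_def using that fscar unfolding k_def by (intro col_mat_of_cols) auto
  have lc: "F *\<^sub>v vec k (\<lambda>i. a (fs ! i)) = lincomb a S" for a
  proof -
    have "F *\<^sub>v vec k (\<lambda>i. a (col F i)) = lincomb a (set (cols F))"
      using F colsF fs by (intro mat_mult_eq_lincomb) auto
    moreover have "vec k (\<lambda>i. a (col F i)) = vec k (\<lambda>i. a (fs ! i))"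
      using colF by (intro eq_vecI) auto
    ultimately show ?thesis using colsF fs by simp
  qed
  have inj: "\<forall>c \<in> carrier_vec k. F *\<^sub>v c = 0\<^sub>v n \<longrightarrow> c = 0\<^sub>v k"
  proof (intro ballI impI)
    fix c :: "'a vec" assume c: "c \<in> carrier_vec k" and Fc: "F *\<^sub>v c = 0\<^sub>v n"
    define a where "a = (\<lambda>x. c $ find_first x fs)"
    have ca: "c = vec k (\<lambda>i. a (fs ! i))"
      unfolding a_def using c fs(2) find_first_unique[OF fs(2)] unfolding k_def by (intro eq_vecI) auto
    have "lincomb a S = 0\<^sub>v n" using lc[of a] ca Fc by simp
    then have "\<forall>v\<in>S. a v = 0" using li finS unfolding lin_dep_def by auto
    then show "c = 0\<^sub>v k" using ca fs unfolding k_def by (intro eq_vecI) auto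
  qed
  have inspan: "\<exists>c\<in>carrier_vec k. col A j = F *\<^sub>v c" if j: "j < nc" for j
  proof -
    have vA: "col A j \<in> set (cols A)" using j A by (simp add: cols_def)
    have vcar: "col A j \<in> carrier_vec n" using j A by simp
    have "col A j \<in> span S"
    proof (cases "col A j \<in> S")
      case True
      then show ?thesis using in_own_span[OF Scar] by blast
    next
      case False
      have "\<not> lin_indpt (S \<union> {col A j})"
      proof
        assume "lin_indpt (S \<union> {col A j})"
        then have "S \<union> {col A j} = S" using max vA unfolding maximal_def by blast
        then show False using False by blast
      qed
      then show ?thesis using lin_dep_iff_in_span[OF Scar li vcar False] by simp
    qed
    then obtain a where "lincomb a S = col A j" using finite_in_span[OF finS Scar] by auto
    then show ?thesis using lc[of a] by (intro bexI[of _ "vec k (\<lambda>i. a (fs ! i))"]) auto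
  qed
  then obtain cf where cf: "\<And>j. j < nc \<Longrightarrow> cf j \<in> carrier_vec k \<and> col A j = F *\<^sub>v cf j"
    by metis
  define G where "G = mat_of_cols k (map cf [0..<nc])"
  have G: "G \<in> carrier_mat k nc" unfolding G_def using mat_of_cols_carrier(1)[of k "map cf [0..<nc]"] by simp
  have colG: "col G j = cf j" if "j < nc" for j
    unfolding G_def using that cf by (subst col_mat_of_cols) auto
  have AFG: "A = F * G"
  proof (rule mat_col_eqI)
    fix j assume "j < dim_col (F * G)"
    then have j: "j < nc" using G by simp
    then show "col A j = col (F * G) j" using cf[OF j] colG[OF j] col_mult2[OF F G j] by simp
  qed (use A F G in auto)
  have unit: "\<forall>i<k. \<exists>j<nc. col G j = unit_vec k i"
  proof (intro allI impI)
    fix i assume i: "i < k"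
    have "fs ! i \<in> set (cols A)" using i fs Ssub unfolding k_def by auto
    then obtain j where j: "j < nc" "col A j = fs ! i" using A by (auto simp: cols_def)
    have e1: "F *\<^sub>v cf j = F *\<^sub>v unit_vec k i" using cf[OF j(1)] j(2) colF[OF i] mat_vec_unit[OF F i] by simp
    have "F *\<^sub>v (cf j - unit_vec k i) = 0\<^sub>v n"
      using e1 cf[OF j(1)] F by (simp add: mult_minus_distrib_mat_vec)
    then have "cf j - unit_vec k i = 0\<^sub>v k" using inj cf[OF j(1)] by simp
    then have "cf j = unit_vec k i" using cf[OF j(1)]
      by (metis carrier_vecD index_minus_vec(1) index_unit_vec(3) index_zero_vec(1) eq_vecI right_minus_eq)
    then show "\<exists>j<nc. col G j = unit_vec k i" using j colG by auto
  qed
  show ?thesis using F G AFG rk inj unit by blast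
qed

lemma inv_exists: fixes N :: "complex mat"
  assumes N: "N \<in> carrier_mat k k" and inj: "\<And>v. v \<in> carrier_vec k \<Longrightarrow> N *\<^sub>v v = 0\<^sub>v k \<Longrightarrow> v = 0\<^sub>v k"
  shows "\<exists>L. L \<in> carrier_mat k k \<and> L * N = 1\<^sub>m k \<and> N * L = 1\<^sub>m k"
proof -
  have "det N \<noteq> 0" using det_0_iff_vec_prod_zero_field[OF N] inj by auto
  from det_non_zero_imp_unit[OF N this, of "()"]
  have "N \<in> Units (ring_mat TYPE(complex) k ())" .
  then obtain L where L: "L * N = 1\<^sub>m k" "L \<in> carrier_mat k k"
    unfolding Units_def ring_mat_def by auto
  then have "N * L = 1\<^sub>m k" using mat_mult_left_right_inverse[OF L(2) N] by simp
  then show ?thesis using L by blast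
qed

lemma herm_inv: fixes N L :: "complex mat"
  assumes N: "N \<in> carrier_mat k k" and L: "L \<in> carrier_mat k k" and h: "mat_adjoint N = N"
    and NL: "N * L = 1\<^sub>m k"
  shows "mat_adjoint L = L"
proof -
  have "mat_adjoint L = mat_adjoint (N * L) * L"
  proof -
    have "mat_adjoint L = mat_adjoint L * (N * L)" using NL L by simp
    also have "\<dots> = (mat_adjoint L * N) * L" using L N by (simp add: massoc)
    also have "\<dots> = mat_adjoint (N * L) * L" using L N h by (simp add: madj_mult)
    finally show ?thesis .
  qed
  also have "\<dots> = L" using NL L by simp
  finally show ?thesis .
qed

lemma mp_unique: fixes A X Y :: "complex mat"
  assumes X: "is_moore_penrose A X" and Y: "is_moore_penrose A Y"
  shows "X = Y"
proof -
  define m where "m = dim_row A"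
  define n where "n = dim_col A"
  have dA: "dim_row A = m" "dim_col A = n" unfolding m_def n_def by auto
  have dX: "dim_row X = n" "dim_col X = m" using X unfolding is_moore_penrose_def m_def n_def by auto
  have dY: "dim_row Y = n" "dim_col Y = m" using Y unfolding is_moore_penrose_def m_def n_def by auto
  note d = dA dX dY adj_dims index_mult_mat(2,3)
  have X1: "A * X * A = A" and X2: "X * A * X = X" and X3: "mat_adjoint (A * X) = A * X"
    and X4: "mat_adjoint (X * A) = X * A" using X unfolding is_moore_penrose_def by auto
  have Y1: "A * Y * A = A" and Y2: "Y * A * Y = Y" and Y3: "mat_adjoint (A * Y) = A * Y"
    and Y4: "mat_adjoint (Y * A) = Y * A" using Y unfolding is_moore_penrose_def by auto
  have hX3: "mat_adjoint X * mat_adjoint A = A * X" using X3 d by (simp add: madj_mult)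
  have hX4: "mat_adjoint A * mat_adjoint X = X * A" using X4 d by (simp add: madj_mult)
  have hY3: "mat_adjoint Y * mat_adjoint A = A * Y" using Y3 d by (simp add: madj_mult)
  have hY4: "mat_adjoint A * mat_adjoint Y = Y * A" using Y4 d by (simp add: madj_mult)
  have aA: "mat_adjoint A = mat_adjoint A * mat_adjoint Y * mat_adjoint A"
  proof -
    have "mat_adjoint A = mat_adjoint (A * Y * A)" using Y1 by simp
    also have "\<dots> = mat_adjoint A * mat_adjoint Y * mat_adjoint A" using d by (simp add: madj_mult massoc)
    finally show ?thesis .
  qed
  have aA': "mat_adjoint A = mat_adjoint A * mat_adjoint X * mat_adjoint A"
  proof -
    have "mat_adjoint A = mat_adjoint (A * X * A)" using X1 by simp
    also have "\<dots> = mat_adjoint A * mat_adjoint X * mat_adjoint A" using d by (simp add: madj_mult massoc)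
    finally show ?thesis .
  qed
  have e1: "X = X * A * Y"
  proof -
    have "X = X * (A * X)" using X2 d by (simp add: massoc)
    also have "\<dots> = X * (mat_adjoint X * mat_adjoint A)" using hX3 by simp
    also have "\<dots> = X * (mat_adjoint X * (mat_adjoint A * mat_adjoint Y * mat_adjoint A))"
      using aA by simp
    also have "\<dots> = X * ((mat_adjoint X * mat_adjoint A) * (mat_adjoint Y * mat_adjoint A))"
      using d by (simp add: massoc)
    also have "\<dots> = X * ((A * X) * (A * Y))" using hX3 hY3 by simp
    also have "\<dots> = (X * A * X) * A * Y" using d by (simp add: massoc)
    also have "\<dots> = X * A * Y" using X2 by simp
    finally show ?thesis .
  qed
  have e2: "Y = X * A * Y"
  proof -
    have "Y = (Y * A) * Y" using Y2 by simp
    also have "\<dots> = (mat_adjoint A * mat_adjoint Y) * Y" using hY4 by simp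
    also have "\<dots> = ((mat_adjoint A * mat_adjoint X * mat_adjoint A) * mat_adjoint Y) * Y"
      using aA' by simp
    also have "\<dots> = ((mat_adjoint A * mat_adjoint X) * (mat_adjoint A * mat_adjoint Y)) * Y"
      using d by (simp add: massoc)
    also have "\<dots> = ((X * A) * (Y * A)) * Y" using hX4 hY4 by simp
    also have "\<dots> = X * A * (Y * A * Y)" using d by (simp add: massoc)
    also have "\<dots> = X * A * Y" using Y2 by simp
    finally show ?thesis .
  qed
  show ?thesis using e1 e2 by simp
qed

lemma mp_exists_tr: fixes A :: "complex mat" assumes A: "A \<in> carrier_mat m n"
  shows "\<exists>X. is_moore_penrose A X \<and> tr (A * X) = of_nat (crank A)"
proof -
  interpret vec_space "TYPE(complex)" m .
  obtain k F G where F: "F \<in> carrier_mat m k" and G: "G \<in> carrier_mat k n" and AFG: "A = F * G"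
    and rk: "rank A = k" and inj: "\<forall>c\<in>carrier_vec k. F *\<^sub>v c = 0\<^sub>v m \<longrightarrow> c = 0\<^sub>v k"
    and unit: "\<forall>i<k. \<exists>j<n. col G j = unit_vec k i"
    using full_rank_factor[OF A] by blast
  have crk: "crank A = k" unfolding crank_def using rk A by simp
  have dF: "dim_row F = m" "dim_col F = k" using F by auto
  have dG: "dim_row G = k" "dim_col G = n" using G by auto
  define N1 where "N1 = mat_adjoint F * F"
  have N1: "N1 \<in> carrier_mat k k" unfolding N1_def using dF by (intro carrier_matI) auto
  have N1inj: "v = 0\<^sub>v k" if v: "v \<in> carrier_vec k" and z: "N1 *\<^sub>v v = 0\<^sub>v k" for v
  proof -
    have "mat_adjoint F *\<^sub>v (F *\<^sub>v v) = 0\<^sub>v (dim_col F)"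
      using z v F unfolding N1_def by (simp add: assoc_mult_mat_vec[symmetric, of _ k m _ k])
    then have "F *\<^sub>v v = 0\<^sub>v (dim_row F)" using v dF by (intro adj_mult_vec_zero) auto
    then show ?thesis using inj v dF by auto
  qed
  obtain L where L: "L \<in> carrier_mat k k" "L * N1 = 1\<^sub>m k" "N1 * L = 1\<^sub>m k"
    using inv_exists[OF N1 N1inj] by blast
  have hN1: "mat_adjoint N1 = N1" unfolding N1_def using dF by (simp add: madj_mult)
  have hL: "mat_adjoint L = L" using herm_inv[OF N1 L(1) hN1 L(3)] .
  define N2 where "N2 = G * mat_adjoint G"
  have N2: "N2 \<in> carrier_mat k k" unfolding N2_def using dG by (intro carrier_matI) auto
  have N2inj: "v = 0\<^sub>v k" if v: "v \<in> carrier_vec k" and z: "N2 *\<^sub>v v = 0\<^sub>v k" for v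
  proof -
    have "mat_adjoint (mat_adjoint G) *\<^sub>v (mat_adjoint G *\<^sub>v v) = 0\<^sub>v (dim_col (mat_adjoint G))"
      using z v G unfolding N2_def by (simp add: assoc_mult_mat_vec[symmetric, of _ k n _ k])
    then have w0: "mat_adjoint G *\<^sub>v v = 0\<^sub>v (dim_row (mat_adjoint G))"
      using v dG by (intro adj_mult_vec_zero) auto
    show ?thesis
    proof (rule eq_vecI)
      fix i assume "i < dim_vec (0\<^sub>v k :: complex vec)"
      then have i: "i < k" by simp
      obtain j where j: "j < n" "col G j = unit_vec k i" using unit i by blast
      have r: "row (mat_adjoint G) j = unit_vec k i"
      proof (rule eq_vecI)
        fix l assume "l < dim_vec (unit_vec k i)"
        then have l: "l < k" by simp
        have "G $$ (l, j) = unit_vec k i $ l" using j(2) l j(1) dG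
          by (metis col_def index_vec)
        then show "row (mat_adjoint G) j $ l = unit_vec k i $ l"
          using l j(1) dG by (auto simp: unit_vec_def)
      qed (use dG in simp)
      have "(mat_adjoint G *\<^sub>v v) $ j = v $ i" using r j(1) dG v i by simp
      then show "v $ i = 0\<^sub>v k $ i" using w0 j(1) dG i by simp
    qed (use v in simp)
  qed
  obtain K where K: "K \<in> carrier_mat k k" "K * N2 = 1\<^sub>m k" "N2 * K = 1\<^sub>m k"
    using inv_exists[OF N2 N2inj] by blast
  have hN2: "mat_adjoint N2 = N2" unfolding N2_def using dG by (simp add: madj_mult)
  have hK: "mat_adjoint K = K" using herm_inv[OF N2 K(1) hN2 K(3)] .
  have dK: "dim_row K = k" "dim_col K = k" using K by auto
  have dL: "dim_row L = k" "dim_col L = k" using L by auto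
  note d = dF dG dK dL adj_dims index_mult_mat(2,3)
  define X where "X = mat_adjoint G * K * L * mat_adjoint F"
  have X: "X \<in> carrier_mat n m" unfolding X_def using d by (intro carrier_matI) auto
  have AX: "A * X = F * (L * mat_adjoint F)"
  proof -
    have "A * X = F * ((G * mat_adjoint G * K) * (L * mat_adjoint F))"
      unfolding AFG X_def using d by (simp add: massoc)
    also have "\<dots> = F * (L * mat_adjoint F)" using K(3) d unfolding N2_def by simp
    finally show ?thesis .
  qed
  have XA: "X * A = mat_adjoint G * (K * G)"
  proof -
    have "X * A = mat_adjoint G * (K * ((L * (mat_adjoint F * F)) * G))"
      unfolding AFG X_def using d by (simp add: massoc)
    also have "\<dots> = mat_adjoint G * (K * G)" using L(2) d unfolding N1_def by simp
    finally show ?thesis .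
  qed
  have AXA: "A * X * A = A"
  proof -
    have "A * X * A = F * ((L * (mat_adjoint F * F)) * G)"
      unfolding AX using d AFG by (simp add: massoc)
    also have "\<dots> = A" using L(2) d AFG unfolding N1_def by simp
    finally show ?thesis .
  qed
  have XAX: "X * A * X = X"
  proof -
    have "X * A * X = mat_adjoint G * (K * G) * X" using XA by simp
    also have "\<dots> = mat_adjoint G * ((K * (G * mat_adjoint G)) * (K * (L * mat_adjoint F)))"
      unfolding X_def using d by (simp add: massoc)
    also have "\<dots> = mat_adjoint G * (K * (L * mat_adjoint F))" using K(2) d unfolding N2_def by simp
    also have "\<dots> = X" unfolding X_def using d by (simp add: massoc)
    finally show ?thesis .
  qed
  have hAX: "mat_adjoint (A * X) = A * X"
    unfolding AX using d hL by (simp add: madj_mult massoc)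
  have hXA: "mat_adjoint (X * A) = X * A"
    unfolding XA using d hK by (simp add: madj_mult massoc)
  have mp: "is_moore_penrose A X"
    unfolding is_moore_penrose_def using X A AXA XAX hAX hXA by auto
  have "tr (A * X) = tr ((L * mat_adjoint F) * F)"
    unfolding AX using d by (intro tr_comm[of _ m k]) (auto intro: carrier_matI)
  also have "\<dots> = tr (L * N1)" unfolding N1_def using d by (simp add: massoc)
  also have "\<dots> = of_nat k" using L(2) by simp
  finally show ?thesis using mp crk by auto
qed

lemma pinv_mp: fixes A :: "complex mat" assumes A: "A \<in> carrier_mat m n"
  shows "is_moore_penrose A (pinv A)" and "tr (A * pinv A) = of_nat (crank A)"
proof -
  obtain X where X: "is_moore_penrose A X" "tr (A * X) = of_nat (crank A)"
    using mp_exists_tr[OF A] by blast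
  have "pinv A = X" unfolding pinv_def
    using X(1) mp_unique by (intro the_equality) auto
  then show "is_moore_penrose A (pinv A)" and "tr (A * pinv A) = of_nat (crank A)" using X by auto
qed

lemma mdist_r: "dim_row A = dim_row B \<Longrightarrow> dim_col A = dim_col B \<Longrightarrow> dim_col B = dim_row C \<Longrightarrow>
  (A - B) * C = A * C - B * (C::complex mat)"
  by (rule minus_mult_distrib_mat[of A "dim_row B" "dim_col B" B C "dim_col C"]) (auto intro: carrier_matI)

lemma mdist_l: "dim_col A = dim_row B \<Longrightarrow> dim_row B = dim_row C \<Longrightarrow> dim_col B = dim_col C \<Longrightarrow>
  A * (B - C) = A * B - A * (C::complex mat)"
  by (rule mult_minus_distrib_mat[of A "dim_row A" "dim_col A" B "dim_col C" C]) (auto intro: carrier_matI)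

lemma mminus_zero[simp]: "dim_row A = a \<Longrightarrow> dim_col A = b \<Longrightarrow> A - 0\<^sub>m a b = (A::complex mat)"
  by (intro eq_matI) auto

lemma mzero_minus: "dim_row A = a \<Longrightarrow> dim_col A = b \<Longrightarrow> 0\<^sub>m a b - A = - (A::complex mat)"
  by (intro eq_matI) auto

lemma mminus_self: "A - A = 0\<^sub>m (dim_row A) (dim_col (A::complex mat))"
  by (intro eq_matI) auto

lemma fro_zero[simp]: "fro_norm (0\<^sub>m a b) = 0"
  unfolding fro_norm_def by simp

definition hproj :: "complex mat \<Rightarrow> nat \<Rightarrow> bool" where
  "hproj P p \<longleftrightarrow> P \<in> carrier_mat p p \<and> mat_adjoint P = P \<and> P * P = P"

lemma hproj_dims: "hproj P p \<Longrightarrow> dim_row P = p \<and> dim_col P = p"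
  unfolding hproj_def by auto

lemma hproj_orth: assumes "hproj P p"
  shows "P * (1\<^sub>m p - P) = 0\<^sub>m p p" "(1\<^sub>m p - P) * P = 0\<^sub>m p p"
proof -
  have P: "dim_row P = p" "dim_col P = p" "P * P = P" using assms unfolding hproj_def by auto
  show "P * (1\<^sub>m p - P) = 0\<^sub>m p p" using P by (simp add: mdist_l mminus_self)
  show "(1\<^sub>m p - P) * P = 0\<^sub>m p p" using P by (simp add: mdist_r mminus_self)
qed

lemma hproj_compl: assumes "hproj P p" shows "hproj (1\<^sub>m p - P) p"
proof -
  have P: "P \<in> carrier_mat p p" "dim_row P = p" "dim_col P = p" "P * P = P" "mat_adjoint P = P"
    using assms unfolding hproj_def by auto
  have "(1\<^sub>m p - P) * (1\<^sub>m p - P) = (1\<^sub>m p - P) - P * (1\<^sub>m p - P)"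
    using P by (simp add: mdist_r)
  also have "\<dots> = 1\<^sub>m p - P" using hproj_orth(1)[OF assms] P by simp
  finally show ?thesis unfolding hproj_def using P by (auto simp: adj_minus[of _ p p])
qed

lemma split_l: assumes Q: "hproj Q p" and Y: "dim_row Y = p"
  shows "(fro_norm Y)\<^sup>2 = (fro_norm (Q * Y))\<^sup>2 + (fro_norm ((1\<^sub>m p - Q) * Y))\<^sup>2"
proof -
  have d: "dim_row Q = p" "dim_col Q = p" "mat_adjoint Q = Q" using Q unfolding hproj_def by auto
  have e: "(1\<^sub>m p - Q) * Y = Y - Q * Y" using d Y by (simp add: mdist_r)
  have sum: "Q * Y + (1\<^sub>m p - Q) * Y = Y" unfolding e using d Y by (intro eq_matI) auto
  have o: "mat_adjoint (Q * Y) * ((1\<^sub>m p - Q) * Y) = 0\<^sub>m (dim_col Y) (dim_col Y)"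
  proof -
    have "mat_adjoint (Q * Y) * ((1\<^sub>m p - Q) * Y) = mat_adjoint Y * ((Q * (1\<^sub>m p - Q)) * Y)"
      using d Y by (simp add: madj_mult massoc)
    also have "\<dots> = 0\<^sub>m (dim_col Y) (dim_col Y)" using hproj_orth(1)[OF Q] Y by simp
    finally show ?thesis .
  qed
  have "(fro_norm (Q * Y + (1\<^sub>m p - Q) * Y))\<^sup>2 = (fro_norm (Q * Y))\<^sup>2 + (fro_norm ((1\<^sub>m p - Q) * Y))\<^sup>2"
    using d Y o by (intro fro_orth[of _ p "dim_col Y"]) (auto intro: carrier_matI)
  then show ?thesis unfolding sum .
qed

lemma split_r: assumes P: "hproj P p" and Y: "dim_col Y = p"
  shows "(fro_norm Y)\<^sup>2 = (fro_norm (Y * P))\<^sup>2 + (fro_norm (Y * (1\<^sub>m p - P)))\<^sup>2"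
proof -
  have d: "dim_row P = p" "dim_col P = p" "mat_adjoint P = P" using P unfolding hproj_def by auto
  have c: "mat_adjoint (1\<^sub>m p - P) = 1\<^sub>m p - P" using hproj_compl[OF P] unfolding hproj_def by auto
  have "(fro_norm (mat_adjoint Y))\<^sup>2 = (fro_norm (P * mat_adjoint Y))\<^sup>2 + (fro_norm ((1\<^sub>m p - P) * mat_adjoint Y))\<^sup>2"
    using Y by (intro split_l[OF P]) simp
  moreover have "P * mat_adjoint Y = mat_adjoint (Y * P)" using d Y by (simp add: madj_mult)
  moreover have "(1\<^sub>m p - P) * mat_adjoint Y = mat_adjoint (Y * (1\<^sub>m p - P))" using d Y c by (simp add: madj_mult)
  ultimately show ?thesis by simp
qed

lemma claimG: assumes P: "hproj P m" and Q: "hproj Q n" and E: "E \<in> carrier_mat m n"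
  and z: "(1\<^sub>m m - P) * E * (1\<^sub>m n - Q) = 0\<^sub>m m n"
  shows "(fro_norm ((1\<^sub>m m - P) * E))\<^sup>2 = (fro_norm ((1\<^sub>m m - P) * E * Q))\<^sup>2"
    and "(fro_norm (E * (1\<^sub>m n - Q)))\<^sup>2 = (fro_norm (P * E * (1\<^sub>m n - Q)))\<^sup>2"
    and "(fro_norm ((1\<^sub>m m - P) * E))\<^sup>2 + (fro_norm (E * (1\<^sub>m n - Q)))\<^sup>2 = (fro_norm E)\<^sup>2 - (fro_norm (P * E * Q))\<^sup>2"
proof -
  have dP: "dim_row P = m" "dim_col P = m" using P unfolding hproj_def by auto
  have dQ: "dim_row Q = n" "dim_col Q = n" using Q unfolding hproj_def by auto
  have dE: "dim_row E = m" "dim_col E = n" using E by auto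
  have s1: "(fro_norm ((1\<^sub>m m - P) * E))\<^sup>2 = (fro_norm ((1\<^sub>m m - P) * E * Q))\<^sup>2 + (fro_norm ((1\<^sub>m m - P) * E * (1\<^sub>m n - Q)))\<^sup>2"
    using dE by (intro split_r[OF Q]) simp
  then show 1: "(fro_norm ((1\<^sub>m m - P) * E))\<^sup>2 = (fro_norm ((1\<^sub>m m - P) * E * Q))\<^sup>2" using z by simp
  have s2: "(fro_norm (E * (1\<^sub>m n - Q)))\<^sup>2 = (fro_norm (P * (E * (1\<^sub>m n - Q))))\<^sup>2 + (fro_norm ((1\<^sub>m m - P) * (E * (1\<^sub>m n - Q))))\<^sup>2"
    using dE by (intro split_l[OF P]) simp
  have a1: "P * (E * (1\<^sub>m n - Q)) = P * E * (1\<^sub>m n - Q)" using dE dP dQ by (simp add: massoc)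
  have a2: "(1\<^sub>m m - P) * (E * (1\<^sub>m n - Q)) = (1\<^sub>m m - P) * E * (1\<^sub>m n - Q)" using dE dP dQ by (simp add: massoc)
  show 2: "(fro_norm (E * (1\<^sub>m n - Q)))\<^sup>2 = (fro_norm (P * E * (1\<^sub>m n - Q)))\<^sup>2" using s2 a1 a2 z by simp
  have s3: "(fro_norm E)\<^sup>2 = (fro_norm (P * E))\<^sup>2 + (fro_norm ((1\<^sub>m m - P) * E))\<^sup>2"
    using dE by (intro split_l[OF P]) simp
  have s4: "(fro_norm (P * E))\<^sup>2 = (fro_norm (P * E * Q))\<^sup>2 + (fro_norm (P * E * (1\<^sub>m n - Q)))\<^sup>2"
    using dE dP by (intro split_r[OF Q]) simp
  show "(fro_norm ((1\<^sub>m m - P) * E))\<^sup>2 + (fro_norm (E * (1\<^sub>m n - Q)))\<^sup>2 = (fro_norm E)\<^sup>2 - (fro_norm (P * E * Q))\<^sup>2"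
    using s3 s4 2 by linarith
qed

lemma key_trace: assumes P: "hproj P p" and Q: "hproj Q p" and t: "tr P = tr Q"
  shows "(fro_norm (P * (1\<^sub>m p - Q)))\<^sup>2 = (fro_norm ((1\<^sub>m p - P) * Q))\<^sup>2"
proof -
  have dP: "dim_row P = p" "dim_col P = p" "mat_adjoint P = P" "P * P = P" using P unfolding hproj_def by auto
  have dQ: "dim_row Q = p" "dim_col Q = p" "mat_adjoint Q = Q" "Q * Q = Q" using Q unfolding hproj_def by auto
  have cP: "mat_adjoint (1\<^sub>m p - P) = 1\<^sub>m p - P" "(1\<^sub>m p - P) * (1\<^sub>m p - P) = 1\<^sub>m p - P"
    using hproj_compl[OF P] unfolding hproj_def by auto
  have cQ: "mat_adjoint (1\<^sub>m p - Q) = 1\<^sub>m p - Q" "(1\<^sub>m p - Q) * (1\<^sub>m p - Q) = 1\<^sub>m p - Q"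
    using hproj_compl[OF Q] unfolding hproj_def by auto
  have pp: "P * (P * Z) = P * Z" if "dim_row Z = p" for Z
    using dP that massoc[of P P Z] by simp
  have qq: "Q * (Q * Z) = Q * Z" if "dim_row Z = p" for Z
    using dQ that massoc[of Q Q Z] by simp
  have "complex_of_real ((fro_norm (P * (1\<^sub>m p - Q)))\<^sup>2) = tr (mat_adjoint (P * (1\<^sub>m p - Q)) * (P * (1\<^sub>m p - Q)))"
    by (simp add: tr_adj_mult)
  also have "\<dots> = tr ((1\<^sub>m p - Q) * (P * (1\<^sub>m p - Q)))"
    using dP dQ cQ by (simp add: madj_mult massoc pp)
  also have "\<dots> = tr ((P * (1\<^sub>m p - Q)) * (1\<^sub>m p - Q))"
    using dP dQ by (intro tr_comm[of _ p p]) (auto intro: carrier_matI)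
  also have "\<dots> = tr (P * (1\<^sub>m p - Q))" using dP dQ cQ by (simp add: massoc)
  also have "\<dots> = tr (P - P * Q)" using dP dQ by (simp add: mdist_l)
  also have "\<dots> = tr P - tr (P * Q)" using dP dQ by (intro tr_minus[of _ p]) (auto intro: carrier_matI)
  finally have e1: "complex_of_real ((fro_norm (P * (1\<^sub>m p - Q)))\<^sup>2) = tr P - tr (P * Q)" .
  have cpp: "(1\<^sub>m p - P) * ((1\<^sub>m p - P) * Z) = (1\<^sub>m p - P) * Z" if "dim_row Z = p" for Z
    using dP that massoc[of "1\<^sub>m p - P" "1\<^sub>m p - P" Z] cP by simp
  have "complex_of_real ((fro_norm ((1\<^sub>m p - P) * Q))\<^sup>2) = tr (mat_adjoint ((1\<^sub>m p - P) * Q) * ((1\<^sub>m p - P) * Q))"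
    by (simp add: tr_adj_mult)
  also have "\<dots> = tr (Q * ((1\<^sub>m p - P) * Q))"
    using dP dQ cP by (simp add: madj_mult massoc cpp)
  also have "\<dots> = tr (((1\<^sub>m p - P) * Q) * Q)"
    using dP dQ by (intro tr_comm[of _ p p]) (auto intro: carrier_matI)
  also have "\<dots> = tr ((1\<^sub>m p - P) * Q)" using dP dQ by (simp add: massoc)
  also have "\<dots> = tr (Q - P * Q)" using dP dQ by (simp add: mdist_r)
  also have "\<dots> = tr Q - tr (P * Q)" using dP dQ by (intro tr_minus[of _ p]) (auto intro: carrier_matI)
  finally have e2: "complex_of_real ((fro_norm ((1\<^sub>m p - P) * Q))\<^sup>2) = tr Q - tr (P * Q)" .
  show ?thesis using e1 e2 t by (metis of_real_eq_iff)
qed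

lemma mp_facts: fixes A X :: "complex mat"
  assumes A: "A \<in> carrier_mat m n" and X: "is_moore_penrose A X"
  shows "X \<in> carrier_mat n m" "A * X * A = A" "X * A * X = X" "hproj (A * X) m" "hproj (X * A) n"
proof -
  show Xc: "X \<in> carrier_mat n m" using X A unfolding is_moore_penrose_def by auto
  show 1: "A * X * A = A" and 2: "X * A * X = X" using X unfolding is_moore_penrose_def by auto
  have d: "dim_row A = m" "dim_col A = n" "dim_row X = n" "dim_col X = m" using A Xc by auto
  have "A * X * (A * X) = A * X * A * X" using d by (simp add: massoc)
  then show "hproj (A * X) m" unfolding hproj_def using X d 1 unfolding is_moore_penrose_def
    by (auto intro: carrier_matI)
  have "X * A * (X * A) = X * A * X * A" using d by (simp add: massoc)
  then show "hproj (X * A) n" unfolding hproj_def using X d 2 unfolding is_moore_penrose_def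
    by (auto intro: carrier_matI)
qed

lemma neg_swap: "dim_row X = dim_row Y \<Longrightarrow> dim_col X = dim_col Y \<Longrightarrow> X - Y = - (Y - (X::complex mat))"
  by (intro eq_matI) auto

lemma div_le_aux: assumes "c \<le> w * s" "s \<ge> 0" "w \<ge> 0" shows "c / s \<le> (w::real)"
proof (cases "s = 0")
  case True then show ?thesis using assms by simp
next
  case False then have "s > 0" using assms by simp
  then show ?thesis using assms by (simp add: divide_le_eq)
qed

lemma arith_final: fixes d t a b u v e w c1 c2 sA sB :: real
  assumes "d = t + a + b" "a \<le> sB\<^sup>2 * sB\<^sup>2 * u" "b \<le> sA\<^sup>2 * sA\<^sup>2 * v" "u + v = e - w"
    "c1 \<le> w * sB\<^sup>2" "c2 \<le> sA\<^sup>2 * w" "u \<ge> 0" "v \<ge> 0" "w \<ge> 0"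
  shows "d \<le> max (sA ^ 4) (sB ^ 4) * (e - max (c1 / sB\<^sup>2) (c2 / sA\<^sup>2)) + t"
proof -
  have m1: "c1 / sB\<^sup>2 \<le> w" using assms by (intro div_le_aux) auto
  have m2: "c2 / sA\<^sup>2 \<le> w" using assms by (intro div_le_aux) (auto simp: mult.commute)
  define M where "M = max (sA ^ 4) (sB ^ 4)"
  have M0: "M \<ge> 0" unfolding M_def by (simp add: le_max_iff_disj)
  have p4: "sA\<^sup>2 * sA\<^sup>2 = sA ^ 4" "sB\<^sup>2 * sB\<^sup>2 = sB ^ 4" by (simp_all add: power_add[symmetric])
  have "a \<le> M * u" using assms(2,7) p4 unfolding M_def by (metis max.cobounded2 mult_right_mono order_trans)
  moreover have "b \<le> M * v" using assms(3,8) p4 unfolding M_def by (metis max.cobounded1 mult_right_mono order_trans)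
  ultimately have "a + b \<le> M * (u + v)" by (simp add: distrib_left)
  also have "\<dots> = M * (e - w)" using assms(4) by simp
  also have "\<dots> \<le> M * (e - max (c1 / sB\<^sup>2) (c2 / sA\<^sup>2))" using m1 m2 M0 by (intro mult_left_mono) auto
  finally show ?thesis using assms(1) unfolding M_def by simp
qed

lemma main1: fixes A B XA XB :: "complex mat"
  assumes A: "A \<in> carrier_mat m n" and B: "B \<in> carrier_mat m n"
    and mA: "is_moore_penrose A XA" and mB: "is_moore_penrose B XB"
  defines "E \<equiv> B - A"
  shows "(fro_norm (XB - XA))\<^sup>2 \<le> max ((spec_norm XA)^4) ((spec_norm XB)^4) *
      ((fro_norm E)\<^sup>2 - max ((fro_norm (A * XA * E * XB))\<^sup>2 / (spec_norm XB)\<^sup>2)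
                            ((fro_norm (XA * E * XB * B))\<^sup>2 / (spec_norm XA)\<^sup>2)) + (fro_norm (XB * E * XA))\<^sup>2"
proof -
  note fA = mp_facts[OF A mA] and fB = mp_facts[OF B mB]
  define P where "P = A * XA"
  define Q where "Q = XB * B"
  have dA: "dim_row A = m" "dim_col A = n" using A by auto
  have dB: "dim_row B = m" "dim_col B = n" using B by auto
  have dXA: "dim_row XA = n" "dim_col XA = m" using fA(1) by auto
  have dXB: "dim_row XB = n" "dim_col XB = m" using fB(1) by auto
  have dE: "dim_row E = m" "dim_col E = n" unfolding E_def using dA dB by auto
  have Pp: "hproj P m" unfolding P_def using fA(4) .
  have Qp: "hproj Q n" unfolding Q_def using fB(5) .
  have hBX: "hproj (B * XB) m" using fB(4) .
  have dP: "dim_row P = m" "dim_col P = m" "mat_adjoint P = P" using Pp unfolding hproj_def by auto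
  have dQ: "dim_row Q = n" "dim_col Q = n" "mat_adjoint Q = Q" using Qp unfolding hproj_def by auto
  have cP: "mat_adjoint (1\<^sub>m m - P) = 1\<^sub>m m - P" using hproj_compl[OF Pp] unfolding hproj_def by auto
  have cQ: "mat_adjoint (1\<^sub>m n - Q) = 1\<^sub>m n - Q" using hproj_compl[OF Qp] unfolding hproj_def by auto
  note d = dA dB dXA dXB dE dP dQ
  have QXB: "Q * XB = XB" unfolding Q_def using fB(3) .
  have XAP: "XA * P = XA" unfolding P_def using fA(3) d by (simp add: massoc)
  have PA: "P * A = A" unfolding P_def using fA(2) .
  have BQ: "B * Q = B" unfolding Q_def using fB(2) d by (simp add: massoc)
  define D where "D = XB - XA"
  have dD: "dim_row D = n" "dim_col D = m" unfolding D_def using d by auto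
  note d = d dD
  have sa: "(fro_norm D)\<^sup>2 = (fro_norm (Q * D))\<^sup>2 + (fro_norm ((1\<^sub>m n - Q) * D))\<^sup>2"
    using dD by (intro split_l[OF Qp]) simp
  have InQXB: "(1\<^sub>m n - Q) * XB = 0\<^sub>m n m" using d QXB by (simp add: mdist_r mminus_self)
  have "(1\<^sub>m n - Q) * D = (1\<^sub>m n - Q) * XB - (1\<^sub>m n - Q) * XA" unfolding D_def using d by (simp add: mdist_l)
  also have "\<dots> = - ((1\<^sub>m n - Q) * XA)" unfolding InQXB using d by (simp add: mzero_minus)
  finally have t3: "(fro_norm ((1\<^sub>m n - Q) * D))\<^sup>2 = (fro_norm ((1\<^sub>m n - Q) * XA))\<^sup>2" by simp
  have QD: "Q * D = XB - Q * XA" unfolding D_def using d QXB by (simp add: mdist_l)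
  have sb: "(fro_norm (Q * D))\<^sup>2 = (fro_norm (Q * D * P))\<^sup>2 + (fro_norm (Q * D * (1\<^sub>m m - P)))\<^sup>2"
    using d by (intro split_r[OF Pp]) simp
  have T1: "XB * E * XA = Q * XA - XB * P"
    unfolding E_def Q_def P_def using d by (simp add: mdist_l mdist_r massoc)
  have "Q * D * P = XB * P - Q * XA * P" unfolding QD using d by (simp add: mdist_r)
  also have "\<dots> = XB * P - Q * XA" using d XAP by (simp add: massoc)
  also have "\<dots> = - (XB * E * XA)" unfolding T1 using d by (intro neg_swap) auto
  finally have t1: "(fro_norm (Q * D * P))\<^sup>2 = (fro_norm (XB * E * XA))\<^sup>2" by simp
  have XAIP: "XA * (1\<^sub>m m - P) = 0\<^sub>m n m" using d XAP by (simp add: mdist_l mminus_self)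
  have "Q * D * (1\<^sub>m m - P) = XB * (1\<^sub>m m - P) - Q * XA * (1\<^sub>m m - P)" unfolding QD using d by (simp add: mdist_r)
  also have "\<dots> = XB * (1\<^sub>m m - P)" using d XAIP by (simp add: massoc)
  finally have t2: "Q * D * (1\<^sub>m m - P) = XB * (1\<^sub>m m - P)" .
  have decomp: "(fro_norm D)\<^sup>2 = (fro_norm (XB * E * XA))\<^sup>2 + (fro_norm (XB * (1\<^sub>m m - P)))\<^sup>2 + (fro_norm ((1\<^sub>m n - Q) * XA))\<^sup>2"
    using sa sb t1 t2 t3 by simp
  have IPA: "(1\<^sub>m m - P) * A = 0\<^sub>m m n" using d PA by (simp add: mdist_r mminus_self)
  have IPE: "(1\<^sub>m m - P) * E = (1\<^sub>m m - P) * B" unfolding E_def using d IPA by (simp add: mdist_l)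
  define W where "W = (1\<^sub>m m - P) * E * XB"
  have adjW: "mat_adjoint W = B * XB * (1\<^sub>m m - P)"
  proof -
    have "W = (1\<^sub>m m - P) * (B * XB)" unfolding W_def IPE using d by (simp add: massoc)
    then show ?thesis using d cP hBX unfolding hproj_def by (simp add: madj_mult)
  qed
  have XBadjW: "XB * mat_adjoint W = XB * (1\<^sub>m m - P)"
    unfolding adjW using d fB(3) by (simp add: massoc[symmetric])
  have "(fro_norm (XB * (1\<^sub>m m - P)))\<^sup>2 \<le> (spec_norm XB)\<^sup>2 * (fro_norm (mat_adjoint W))\<^sup>2"
    unfolding XBadjW[symmetric] using d unfolding W_def by (intro fro_mult_left[of _ n m _ m]) (auto intro: carrier_matI)
  also have "\<dots> \<le> (spec_norm XB)\<^sup>2 * ((fro_norm ((1\<^sub>m m - P) * E))\<^sup>2 * (spec_norm XB)\<^sup>2)"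
    unfolding fro_adj W_def using d by (intro mult_left_mono fro_mult_right[of _ m n _ m]) (auto intro: carrier_matI)
  finally have b1: "(fro_norm (XB * (1\<^sub>m m - P)))\<^sup>2 \<le> (spec_norm XB)\<^sup>2 * (spec_norm XB)\<^sup>2 * (fro_norm ((1\<^sub>m m - P) * E))\<^sup>2"
    by (simp add: mult_ac)
  have BIQ: "B * (1\<^sub>m n - Q) = 0\<^sub>m m n" using d BQ by (simp add: mdist_l mminus_self)
  have EIQ: "E * (1\<^sub>m n - Q) = - (A * (1\<^sub>m n - Q))" unfolding E_def using d BIQ by (simp add: mdist_r mzero_minus)
  define Z where "Z = XA * A * (1\<^sub>m n - Q)"
  have adjZ: "mat_adjoint Z = (1\<^sub>m n - Q) * (XA * A)"
    unfolding Z_def using d cQ fA(5) unfolding hproj_def by (simp add: madj_mult)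
  have adjZXA: "mat_adjoint Z * XA = (1\<^sub>m n - Q) * XA"
    unfolding adjZ using d fA(3) by (simp add: massoc)
  have fZ: "fro_norm Z = fro_norm (XA * (E * (1\<^sub>m n - Q)))"
  proof -
    have "XA * (E * (1\<^sub>m n - Q)) = - Z" unfolding EIQ Z_def using d by (simp add: massoc)
    then show ?thesis by simp
  qed
  have "(fro_norm ((1\<^sub>m n - Q) * XA))\<^sup>2 \<le> (fro_norm (mat_adjoint Z))\<^sup>2 * (spec_norm XA)\<^sup>2"
    unfolding adjZXA[symmetric] using d unfolding Z_def by (intro fro_mult_right[of _ n n _ m]) (auto intro: carrier_matI)
  also have "\<dots> \<le> ((spec_norm XA)\<^sup>2 * (fro_norm (E * (1\<^sub>m n - Q)))\<^sup>2) * (spec_norm XA)\<^sup>2"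
    unfolding fro_adj fZ using d by (intro mult_right_mono fro_mult_left[of _ n m _ n]) (auto intro: carrier_matI)
  finally have b2: "(fro_norm ((1\<^sub>m n - Q) * XA))\<^sup>2 \<le> (spec_norm XA)\<^sup>2 * (spec_norm XA)\<^sup>2 * (fro_norm (E * (1\<^sub>m n - Q)))\<^sup>2"
    by (simp add: mult_ac)
  have z: "(1\<^sub>m m - P) * E * (1\<^sub>m n - Q) = 0\<^sub>m m n"
    unfolding IPE using d BIQ by (simp add: massoc)
  have Ec: "E \<in> carrier_mat m n" using dE by (intro carrier_matI)
  note cl = claimG[OF Pp Qp Ec z]
  have c1: "(fro_norm (A * XA * E * XB))\<^sup>2 \<le> (fro_norm (P * E * Q))\<^sup>2 * (spec_norm XB)\<^sup>2"
  proof -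
    have "A * XA * E * XB = P * E * Q * XB" unfolding P_def using d QXB by (simp add: massoc)
    then show ?thesis using d by (simp only:) (intro fro_mult_right[of _ m n _ m]; auto intro: carrier_matI)
  qed
  have c2: "(fro_norm (XA * E * XB * B))\<^sup>2 \<le> (spec_norm XA)\<^sup>2 * (fro_norm (P * E * Q))\<^sup>2"
  proof -
    have "XA * E * XB * B = (XA * P) * E * Q" using d XAP unfolding Q_def by (simp add: massoc)
    also have "\<dots> = XA * (P * E * Q)" using d by (simp add: massoc)
    finally have "XA * E * XB * B = XA * (P * E * Q)" .
    then show ?thesis using d by (simp only:) (intro fro_mult_left[of _ n m _ n]; auto intro: carrier_matI)
  qed
  show ?thesis unfolding D_def[symmetric]
    by (rule arith_final[OF decomp b1 b2 cl(3) c1 c2]) auto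
qed

lemma arith_final2: fixes d t a b u v e w c1 c2 sA sB :: real
  assumes "d = t + a + b" "a \<le> sB\<^sup>2 * (u * sA\<^sup>2)" "b \<le> (sB\<^sup>2 * v) * sA\<^sup>2" "u + v = e - w"
    "c1 \<le> w * sA\<^sup>2" "c2 \<le> sB\<^sup>2 * w" "w \<ge> 0"
  shows "d \<le> sA\<^sup>2 * sB\<^sup>2 * (e - max (c1 / sA\<^sup>2) (c2 / sB\<^sup>2)) + t"
proof -
  have m1: "c1 / sA\<^sup>2 \<le> w" using assms by (intro div_le_aux) auto
  have m2: "c2 / sB\<^sup>2 \<le> w" using assms by (intro div_le_aux) (auto simp: mult.commute)
  define M where "M = sA\<^sup>2 * sB\<^sup>2"
  have M0: "M \<ge> 0" unfolding M_def by simp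
  have "a + b \<le> M * (u + v)" using assms(2,3) unfolding M_def by (simp add: algebra_simps)
  also have "\<dots> = M * (e - w)" using assms(4) by simp
  also have "\<dots> \<le> M * (e - max (c1 / sA\<^sup>2) (c2 / sB\<^sup>2))" using m1 m2 M0 by (intro mult_left_mono) auto
  finally show ?thesis using assms(1) unfolding M_def by simp
qed

lemma main2: fixes A B XA XB :: "complex mat"
  assumes A: "A \<in> carrier_mat m n" and B: "B \<in> carrier_mat m n"
    and mA: "is_moore_penrose A XA" and mB: "is_moore_penrose B XB"
    and t: "tr (A * XA) = tr (B * XB)"
  defines "E \<equiv> B - A"
  shows "(fro_norm (XB - XA))\<^sup>2 \<le> (spec_norm XA)\<^sup>2 * (spec_norm XB)\<^sup>2 *
      ((fro_norm E)\<^sup>2 - max ((fro_norm (B * XB * E * XA))\<^sup>2 / (spec_norm XA)\<^sup>2)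
                            ((fro_norm (XB * E * XA * A))\<^sup>2 / (spec_norm XB)\<^sup>2)) + (fro_norm (XB * E * XA))\<^sup>2"
proof -
  note fA = mp_facts[OF A mA] and fB = mp_facts[OF B mB]
  define P where "P = A * XA"
  define Q where "Q = XB * B"
  define R where "R = B * XB"
  define Q' where "Q' = XA * A"
  have dA: "dim_row A = m" "dim_col A = n" using A by auto
  have dB: "dim_row B = m" "dim_col B = n" using B by auto
  have dXA: "dim_row XA = n" "dim_col XA = m" using fA(1) by auto
  have dXB: "dim_row XB = n" "dim_col XB = m" using fB(1) by auto
  have dE: "dim_row E = m" "dim_col E = n" unfolding E_def using dA dB by auto
  have Pp: "hproj P m" unfolding P_def using fA(4) .
  have Qp: "hproj Q n" unfolding Q_def using fB(5) .
  have Rp: "hproj R m" unfolding R_def using fB(4) .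
  have Q'p: "hproj Q' n" unfolding Q'_def using fA(5) .
  have dP: "dim_row P = m" "dim_col P = m" "mat_adjoint P = P" using Pp unfolding hproj_def by auto
  have dQ: "dim_row Q = n" "dim_col Q = n" "mat_adjoint Q = Q" using Qp unfolding hproj_def by auto
  have dR: "dim_row R = m" "dim_col R = m" using Rp unfolding hproj_def by auto
  have dQ': "dim_row Q' = n" "dim_col Q' = n" using Q'p unfolding hproj_def by auto
  note d = dA dB dXA dXB dE dP dQ dR dQ'
  have QXB: "Q * XB = XB" unfolding Q_def using fB(3) .
  have XAP: "XA * P = XA" unfolding P_def using fA(3) d by (simp add: massoc)
  have PA: "P * A = A" unfolding P_def using fA(2) .
  have BQ: "B * Q = B" unfolding Q_def using fB(2) d by (simp add: massoc)
  have XBR: "XB * R = XB" unfolding R_def using fB(3) d by (simp add: massoc)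
  have RB: "R * B = B" unfolding R_def using fB(2) .
  have Q'XA: "Q' * XA = XA" unfolding Q'_def using fA(3) .
  have AQ': "A * Q' = A" unfolding Q'_def using fA(2) d by (simp add: massoc)
  define D where "D = XB - XA"
  have dD: "dim_row D = n" "dim_col D = m" unfolding D_def using d by auto
  note d = d dD
  have sa: "(fro_norm D)\<^sup>2 = (fro_norm (Q * D))\<^sup>2 + (fro_norm ((1\<^sub>m n - Q) * D))\<^sup>2"
    using dD by (intro split_l[OF Qp]) simp
  have InQXB: "(1\<^sub>m n - Q) * XB = 0\<^sub>m n m" using d QXB by (simp add: mdist_r mminus_self)
  have "(1\<^sub>m n - Q) * D = (1\<^sub>m n - Q) * XB - (1\<^sub>m n - Q) * XA" unfolding D_def using d by (simp add: mdist_l)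
  also have "\<dots> = - ((1\<^sub>m n - Q) * XA)" unfolding InQXB using d by (simp add: mzero_minus)
  finally have t3: "(fro_norm ((1\<^sub>m n - Q) * D))\<^sup>2 = (fro_norm ((1\<^sub>m n - Q) * XA))\<^sup>2" by simp
  have QD: "Q * D = XB - Q * XA" unfolding D_def using d QXB by (simp add: mdist_l)
  have sb: "(fro_norm (Q * D))\<^sup>2 = (fro_norm (Q * D * P))\<^sup>2 + (fro_norm (Q * D * (1\<^sub>m m - P)))\<^sup>2"
    using d by (intro split_r[OF Pp]) simp
  have T1: "XB * E * XA = Q * XA - XB * P"
    unfolding E_def Q_def P_def using d by (simp add: mdist_l mdist_r massoc)
  have "Q * D * P = XB * P - Q * XA * P" unfolding QD using d by (simp add: mdist_r)
  also have "\<dots> = XB * P - Q * XA" using d XAP by (simp add: massoc)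
  also have "\<dots> = - (XB * E * XA)" unfolding T1 using d by (intro neg_swap) auto
  finally have t1: "(fro_norm (Q * D * P))\<^sup>2 = (fro_norm (XB * E * XA))\<^sup>2" by simp
  have XAIP: "XA * (1\<^sub>m m - P) = 0\<^sub>m n m" using d XAP by (simp add: mdist_l mminus_self)
  have "Q * D * (1\<^sub>m m - P) = XB * (1\<^sub>m m - P) - Q * XA * (1\<^sub>m m - P)" unfolding QD using d by (simp add: mdist_r)
  also have "\<dots> = XB * (1\<^sub>m m - P)" using d XAIP by (simp add: massoc)
  finally have t2: "Q * D * (1\<^sub>m m - P) = XB * (1\<^sub>m m - P)" .
  have decomp: "(fro_norm D)\<^sup>2 = (fro_norm (XB * E * XA))\<^sup>2 + (fro_norm (XB * (1\<^sub>m m - P)))\<^sup>2 + (fro_norm ((1\<^sub>m n - Q) * XA))\<^sup>2"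
    using sa sb t1 t2 t3 by simp
  have tRP: "tr R = tr P" using t unfolding R_def P_def by simp
  have tQ: "tr Q = tr R" unfolding Q_def R_def using d by (intro tr_comm[of _ n m]) (auto intro: carrier_matI)
  have tQ': "tr Q' = tr P" unfolding Q'_def P_def using d by (intro tr_comm[of _ n m]) (auto intro: carrier_matI)
  have IRB: "(1\<^sub>m m - R) * B = 0\<^sub>m m n" using d RB by (simp add: mdist_r mminus_self)
  have IRE: "(1\<^sub>m m - R) * E = - ((1\<^sub>m m - R) * A)" unfolding E_def using d IRB by (simp add: mdist_l mzero_minus)
  have AIQ': "A * (1\<^sub>m n - Q') = 0\<^sub>m m n" using d AQ' by (simp add: mdist_l mminus_self)
  have BIQ': "B * (1\<^sub>m n - Q') = E * (1\<^sub>m n - Q')" unfolding E_def using d AIQ' by (simp add: mdist_r)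
  have "(fro_norm (XB * (1\<^sub>m m - P)))\<^sup>2 = (fro_norm (XB * (R * (1\<^sub>m m - P))))\<^sup>2"
    using d XBR massoc[of XB R "1\<^sub>m m - P"] by simp
  also have "\<dots> \<le> (spec_norm XB)\<^sup>2 * (fro_norm (R * (1\<^sub>m m - P)))\<^sup>2"
    using d by (intro fro_mult_left[of _ n m _ m]) (auto intro: carrier_matI)
  also have "(fro_norm (R * (1\<^sub>m m - P)))\<^sup>2 = (fro_norm ((1\<^sub>m m - R) * P))\<^sup>2"
    by (rule key_trace[OF Rp Pp tRP])
  also have "(fro_norm ((1\<^sub>m m - R) * P))\<^sup>2 = (fro_norm ((1\<^sub>m m - R) * E * Q' * XA))\<^sup>2"
  proof -
    have "(1\<^sub>m m - R) * E * Q' * XA = - ((1\<^sub>m m - R) * P)"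
      unfolding IRE P_def using d Q'XA by (simp add: massoc)
    then show ?thesis by simp
  qed
  also have "\<dots> \<le> (fro_norm ((1\<^sub>m m - R) * E * Q'))\<^sup>2 * (spec_norm XA)\<^sup>2"
    using d by (intro fro_mult_right[of _ m n _ m]) (auto intro: carrier_matI)
  finally have b1: "(fro_norm (XB * (1\<^sub>m m - P)))\<^sup>2 \<le> (spec_norm XB)\<^sup>2 * ((fro_norm ((1\<^sub>m m - R) * E * Q'))\<^sup>2 * (spec_norm XA)\<^sup>2)"
    by (simp add: mult_left_mono)
  have "(fro_norm ((1\<^sub>m n - Q) * XA))\<^sup>2 = (fro_norm ((1\<^sub>m n - Q) * Q' * XA))\<^sup>2"
    using d Q'XA massoc[of "1\<^sub>m n - Q" Q' XA] by simp
  also have "\<dots> \<le> (fro_norm ((1\<^sub>m n - Q) * Q'))\<^sup>2 * (spec_norm XA)\<^sup>2"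
    using d by (intro fro_mult_right[of _ n n _ m]) (auto intro: carrier_matI)
  also have "(fro_norm ((1\<^sub>m n - Q) * Q'))\<^sup>2 = (fro_norm (Q * (1\<^sub>m n - Q')))\<^sup>2"
    using key_trace[OF Qp Q'p] tQ tQ' tRP by simp
  also have "Q * (1\<^sub>m n - Q') = XB * (R * E * (1\<^sub>m n - Q'))"
  proof -
    have "Q * (1\<^sub>m n - Q') = XB * (E * (1\<^sub>m n - Q'))" unfolding Q_def using d BIQ' by (simp add: massoc)
    also have "\<dots> = (XB * R) * (E * (1\<^sub>m n - Q'))" using XBR by simp
    also have "\<dots> = XB * (R * E * (1\<^sub>m n - Q'))" using d by (simp add: massoc)
    finally show ?thesis .
  qed
  also have "(fro_norm (XB * (R * E * (1\<^sub>m n - Q'))))\<^sup>2 \<le> (spec_norm XB)\<^sup>2 * (fro_norm (R * E * (1\<^sub>m n - Q')))\<^sup>2"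
    using d by (intro fro_mult_left[of _ n m _ n]) (auto intro: carrier_matI)
  finally have b2: "(fro_norm ((1\<^sub>m n - Q) * XA))\<^sup>2 \<le> ((spec_norm XB)\<^sup>2 * (fro_norm (R * E * (1\<^sub>m n - Q')))\<^sup>2) * (spec_norm XA)\<^sup>2"
    by (simp add: mult_right_mono)
  have z: "(1\<^sub>m m - R) * E * (1\<^sub>m n - Q') = 0\<^sub>m m n"
  proof -
    have "(1\<^sub>m m - R) * E * (1\<^sub>m n - Q') = (1\<^sub>m m - R) * (B * (1\<^sub>m n - Q'))"
      unfolding BIQ' using d by (simp add: massoc)
    also have "\<dots> = ((1\<^sub>m m - R) * B) * (1\<^sub>m n - Q')" using d by (simp add: massoc)
    also have "\<dots> = 0\<^sub>m m n" unfolding IRB using d by simp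
    finally show ?thesis .
  qed
  have Ec: "E \<in> carrier_mat m n" using dE by (intro carrier_matI)
  note cl = claimG[OF Rp Q'p Ec z]
  have c1: "(fro_norm (B * XB * E * XA))\<^sup>2 \<le> (fro_norm (R * E * Q'))\<^sup>2 * (spec_norm XA)\<^sup>2"
  proof -
    have "B * XB * E * XA = R * E * Q' * XA" unfolding R_def using d Q'XA by (simp add: massoc)
    then show ?thesis using d by (simp only:) (intro fro_mult_right[of _ m n _ m]; auto intro: carrier_matI)
  qed
  have c2: "(fro_norm (XB * E * XA * A))\<^sup>2 \<le> (spec_norm XB)\<^sup>2 * (fro_norm (R * E * Q'))\<^sup>2"
  proof -
    have "XB * E * XA * A = (XB * R) * E * Q'" using d XBR unfolding Q'_def by (simp add: massoc)
    also have "\<dots> = XB * (R * E * Q')" using d by (simp add: massoc)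
    finally have "XB * E * XA * A = XB * (R * E * Q')" .
    then show ?thesis using d by (simp only:) (intro fro_mult_left[of _ n m _ n]; auto intro: carrier_matI)
  qed
  have u: "(fro_norm ((1\<^sub>m m - R) * E * Q'))\<^sup>2 + (fro_norm (R * E * (1\<^sub>m n - Q')))\<^sup>2 = (fro_norm E)\<^sup>2 - (fro_norm (R * E * Q'))\<^sup>2"
    using cl by simp
  show ?thesis unfolding D_def[symmetric]
    by (rule arith_final2[OF decomp b1 b2 u c1 c2]) auto
qed

theorem theorem3p5:
  fixes A B :: "complex mat" and m n r s :: nat
  assumes A: "A \<in> carrier_mat m n" and B: "B \<in> carrier_mat m n"
    and rA: "crank A = r" and rB: "crank B = s"
    and A0: "A \<noteq> 0\<^sub>m m n" and B0: "B \<noteq> 0\<^sub>m m n"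
  defines "E \<equiv> B - A"
  defines "\<delta>1 \<equiv> max ((spec_norm (pinv A))^4) ((spec_norm (pinv B))^4) *
      ((fro_norm E)\<^sup>2 - max ((fro_norm (A * pinv A * E * pinv B))\<^sup>2 / (spec_norm (pinv B))\<^sup>2)
                            ((fro_norm (pinv A * E * pinv B * B))\<^sup>2 / (spec_norm (pinv A))\<^sup>2))"
  defines "\<delta>2 \<equiv> max ((spec_norm (pinv A))^4) ((spec_norm (pinv B))^4) *
      ((fro_norm E)\<^sup>2 - max ((fro_norm (B * pinv B * E * pinv A))\<^sup>2 / (spec_norm (pinv A))\<^sup>2)
                            ((fro_norm (pinv B * E * pinv A * A))\<^sup>2 / (spec_norm (pinv B))\<^sup>2))"
  defines "\<epsilon>1 \<equiv> (spec_norm (pinv A))\<^sup>2 * (spec_norm (pinv B))\<^sup>2 *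
      ((fro_norm E)\<^sup>2 - max ((fro_norm (B * pinv B * E * pinv A))\<^sup>2 / (spec_norm (pinv A))\<^sup>2)
                            ((fro_norm (pinv B * E * pinv A * A))\<^sup>2 / (spec_norm (pinv B))\<^sup>2))"
  defines "\<epsilon>2 \<equiv> (spec_norm (pinv A))\<^sup>2 * (spec_norm (pinv B))\<^sup>2 *
      ((fro_norm E)\<^sup>2 - max ((fro_norm (A * pinv A * E * pinv B))\<^sup>2 / (spec_norm (pinv B))\<^sup>2)
                            ((fro_norm (pinv A * E * pinv B * B))\<^sup>2 / (spec_norm (pinv A))\<^sup>2))"
  shows "(fro_norm (pinv B - pinv A))\<^sup>2 \<le>
           min (\<delta>1 + (fro_norm (pinv B * E * pinv A))\<^sup>2) (\<delta>2 + (fro_norm (pinv A * E * pinv B))\<^sup>2)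
         \<and> (s = r \<longrightarrow> (fro_norm (pinv B - pinv A))\<^sup>2 \<le>
           min (\<epsilon>1 + (fro_norm (pinv B * E * pinv A))\<^sup>2) (\<epsilon>2 + (fro_norm (pinv A * E * pinv B))\<^sup>2))"
proof -
  have mA: "is_moore_penrose A (pinv A)" and tA: "tr (A * pinv A) = of_nat (crank A)" using pinv_mp[OF A] by auto
  have mB: "is_moore_penrose B (pinv B)" and tB: "tr (B * pinv B) = of_nat (crank B)" using pinv_mp[OF B] by auto
  have dA: "dim_row A = m" "dim_col A = n" using A by auto
  have dB: "dim_row B = m" "dim_col B = n" using B by auto
  have dpA: "dim_row (pinv A) = n" "dim_col (pinv A) = m" using mp_facts(1)[OF A mA] by auto
  have dpB: "dim_row (pinv B) = n" "dim_col (pinv B) = m" using mp_facts(1)[OF B mB] by auto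
  have dE: "dim_row E = m" "dim_col E = n" unfolding E_def using dA dB by auto
  have AB: "A - B = - E" unfolding E_def using dA dB by (intro neg_swap) auto
  have pAB: "pinv A - pinv B = - (pinv B - pinv A)" using dpA dpB by (intro neg_swap) auto
  have h1: "(fro_norm (pinv B - pinv A))\<^sup>2 \<le> \<delta>1 + (fro_norm (pinv B * E * pinv A))\<^sup>2"
    unfolding \<delta>1_def E_def by (rule main1[OF A B mA mB])
  have h2: "(fro_norm (pinv B - pinv A))\<^sup>2 \<le> \<delta>2 + (fro_norm (pinv A * E * pinv B))\<^sup>2"
    using main1[OF B A mB mA] dA dB dE dpA dpB unfolding \<delta>2_def AB pAB by (simp add: max.commute)
  have c2: "(fro_norm (pinv B - pinv A))\<^sup>2 \<le>
           min (\<epsilon>1 + (fro_norm (pinv B * E * pinv A))\<^sup>2) (\<epsilon>2 + (fro_norm (pinv A * E * pinv B))\<^sup>2)"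
    if sr: "s = r"
  proof -
    have t: "tr (A * pinv A) = tr (B * pinv B)" using tA tB rA rB sr by simp
    have g1: "(fro_norm (pinv B - pinv A))\<^sup>2 \<le> \<epsilon>1 + (fro_norm (pinv B * E * pinv A))\<^sup>2"
      unfolding \<epsilon>1_def E_def by (rule main2[OF A B mA mB t])
    have g2: "(fro_norm (pinv B - pinv A))\<^sup>2 \<le> \<epsilon>2 + (fro_norm (pinv A * E * pinv B))\<^sup>2"
      using main2[OF B A mB mA t[symmetric]] dA dB dE dpA dpB unfolding \<epsilon>2_def AB pAB by (simp add: mult.commute)
    show ?thesis using g1 g2 by simp
  qed
  show ?thesis using h1 h2 c2 by simp
qed

end
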